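(* Let $G$ be a 2-connected graph. Then $\mathrm{lct}(G)\leq \mathrm{tw}(G)+1$. Moreover, if $G$ is chordal, then $\mathrm{lct}(G)\leq\omega(G)$.
   Context: All graphs are finite and simple. A longest cycle transversal of $G$ is a set of vertices meeting every longest cycle (cycle of maximum length) of $G$; $\mathrm{lct}(G)$ is the minimum cardinality of such a set. $\mathrm{tw}(G)$ is the treewidth of $G$: the minimum over tree decompositions $(T,\{V_t\})$ of $G$ of $\max_t |V_t|-1$. A graph is chordal if every induced cycle has length three. $\omega(G)$ is the cardinality of a maximum clique of $G$. *)

theory Defs
  imports Main
begin

definition graph :: "'a set \<Rightarrow> ('a \<Rightarrow> 'a \<Rightarrow> bool) \<Rightarrow> bool" where
  "graph V E \<longleftrightarrow> finite V \<and> (\<forall>u v. E u v \<longrightarrow> u \<in> V \<and> v \<in> V \<and> u \<noteq> v \<and> E v u)"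

definition connected_on :: "'a set \<Rightarrow> ('a \<Rightarrow> 'a \<Rightarrow> bool) \<Rightarrow> bool" where
  "connected_on W E \<longleftrightarrow>
     (\<forall>u\<in>W. \<forall>v\<in>W. (\<lambda>x y. E x y \<and> x \<in> W \<and> y \<in> W)\<^sup>*\<^sup>* u v)"

definition two_connected :: "'a set \<Rightarrow> ('a \<Rightarrow> 'a \<Rightarrow> bool) \<Rightarrow> bool" where
  "two_connected V E \<longleftrightarrow> card V > 2 \<and> (\<forall>X \<subseteq> V. card X < 2 \<longrightarrow> connected_on (V - X) E)"

definition is_cycle :: "'a set \<Rightarrow> ('a \<Rightarrow> 'a \<Rightarrow> bool) \<Rightarrow> 'a list \<Rightarrow> bool" where
  "is_cycle V E c \<longleftrightarrow> length c \<ge> 3 \<and> distinct c \<and> set c \<subseteq> V \<and>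
     (\<forall>i < length c. E (c ! i) (c ! ((i + 1) mod length c)))"

definition longest_cycle :: "'a set \<Rightarrow> ('a \<Rightarrow> 'a \<Rightarrow> bool) \<Rightarrow> 'a list \<Rightarrow> bool" where
  "longest_cycle V E c \<longleftrightarrow> is_cycle V E c \<and> (\<forall>c'. is_cycle V E c' \<longrightarrow> length c' \<le> length c)"

definition lct :: "'a set \<Rightarrow> ('a \<Rightarrow> 'a \<Rightarrow> bool) \<Rightarrow> nat" where
  "lct V E = (LEAST k. \<exists>S \<subseteq> V. card S = k \<and>
       (\<forall>c. longest_cycle V E c \<longrightarrow> set c \<inter> S \<noteq> {}))"

definition induced_cycle :: "'a set \<Rightarrow> ('a \<Rightarrow> 'a \<Rightarrow> bool) \<Rightarrow> 'a list \<Rightarrow> bool" where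
  "induced_cycle V E c \<longleftrightarrow> is_cycle V E c \<and>
     (\<forall>i < length c. \<forall>j < length c. E (c ! i) (c ! j) \<longrightarrow>
        j = (i + 1) mod length c \<or> i = (j + 1) mod length c)"

definition chordal :: "'a set \<Rightarrow> ('a \<Rightarrow> 'a \<Rightarrow> bool) \<Rightarrow> bool" where
  "chordal V E \<longleftrightarrow> (\<forall>c. induced_cycle V E c \<longrightarrow> length c = 3)"

definition clique_number :: "'a set \<Rightarrow> ('a \<Rightarrow> 'a \<Rightarrow> bool) \<Rightarrow> nat" where
  "clique_number V E = Max {card K | K. K \<subseteq> V \<and> (\<forall>u\<in>K. \<forall>v\<in>K. u \<noteq> v \<longrightarrow> E u v)}"

definition is_tree :: "'b set \<Rightarrow> ('b \<Rightarrow> 'b \<Rightarrow> bool) \<Rightarrow> bool" where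
  "is_tree I F \<longleftrightarrow> graph I F \<and> I \<noteq> {} \<and> connected_on I F \<and> \<not> (\<exists>c. is_cycle I F c)"

definition tree_decomposition ::
  "'a set \<Rightarrow> ('a \<Rightarrow> 'a \<Rightarrow> bool) \<Rightarrow> 'b set \<Rightarrow> ('b \<Rightarrow> 'b \<Rightarrow> bool) \<Rightarrow> ('b \<Rightarrow> 'a set) \<Rightarrow> bool" where
  "tree_decomposition V E I F B \<longleftrightarrow> is_tree I F \<and>
     (\<Union>t\<in>I. B t) = V \<and>
     (\<forall>u v. E u v \<longrightarrow> (\<exists>t\<in>I. u \<in> B t \<and> v \<in> B t)) \<and>
     (\<forall>v\<in>V. connected_on {t \<in> I. v \<in> B t} F)"

text \<open>Treewidth; tree nodes are indexed by natural numbers (w.l.o.g., trees are finite).\<close>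
definition treewidth :: "'a set \<Rightarrow> ('a \<Rightarrow> 'a \<Rightarrow> bool) \<Rightarrow> nat" where
  "treewidth V E = (LEAST k. \<exists>(I :: nat set) F B. tree_decomposition V E I F B \<and>
       k = Max ((\<lambda>t. card (B t)) ` I) - 1)"

end

theory Submission
  imports Defs
begin

definition RW :: "('a \<Rightarrow> 'a \<Rightarrow> bool) \<Rightarrow> 'a set \<Rightarrow> 'a \<Rightarrow> 'a \<Rightarrow> bool" where
  "RW E W = (\<lambda>x y. E x y \<and> x \<in> W \<and> y \<in> W)"

lemma connected_on_RW: "connected_on W E \<longleftrightarrow> (\<forall>u\<in>W. \<forall>v\<in>W. (RW E W)\<^sup>*\<^sup>* u v)"
  unfolding connected_on_def RW_def by simp

lemma walk_to_path:
  assumes "R\<^sup>*\<^sup>* a b"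
  shows "\<exists>p. p \<noteq> [] \<and> hd p = a \<and> last p = b \<and> successively R p \<and> distinct p"
  using assms
proof (induction rule: rtranclp_induct)
  case base
  then show ?case by (intro exI[of _ "[a]"]) auto
next
  case (step b c)
  then obtain p where p: "p \<noteq> []" "hd p = a" "last p = b" "successively R p" "distinct p" by blast
  show ?case
  proof (cases "c \<in> set p")
    case True
    then obtain u w where uw: "p = u @ c # w" by (meson split_list)
    show ?thesis
    proof (intro exI[of _ "u @ [c]"] conjI)
      show "hd (u @ [c]) = a" using p uw by (cases u) auto
      show "successively R (u @ [c])" using p(4) uw
        by (auto simp: successively_append_iff successively_Cons)
      show "distinct (u @ [c])" using p(5) uw by auto
    qed auto
  next
    case False
    show ?thesis
    proof (intro exI[of _ "p @ [c]"] conjI)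
      show "hd (p @ [c]) = a" using p by simp
      show "successively R (p @ [c])" using p step
        by (auto simp: successively_append_iff)
      show "distinct (p @ [c])" using p False by auto
    qed auto
  qed
qed

lemma path_reach_nth:
  assumes "successively R p" "i < length p"
  shows "R\<^sup>*\<^sup>* (hd p) (p ! i)"
  using assms(2)
proof (induction i)
  case 0
  then show ?case by (cases p) auto
next
  case (Suc i)
  then have "R (p ! i) (p ! Suc i)" using successively_nth[OF assms(1)] by blast
  with Suc show ?case by (meson Suc_lessD rtranclp.rtrancl_into_rtrancl)
qed

lemma path_reach:
  assumes "successively R p" "p \<noteq> []" "x \<in> set p"
  shows "R\<^sup>*\<^sup>* (hd p) x"
  using assms path_reach_nth by (metis in_set_conv_nth)

lemma path_reach_last:
  assumes "successively R p" "p \<noteq> []"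
  shows "R\<^sup>*\<^sup>* (hd p) (last p)"
  using path_reach[OF assms] assms(2) by simp

lemma successively_RW:
  assumes "successively E p" "set p \<subseteq> W"
  shows "successively (RW E W) p"
  using assms by (auto simp: RW_def intro: successively_mono)

lemma rtranclp_sym:
  assumes "\<And>x y. R x y \<Longrightarrow> R y x" "R\<^sup>*\<^sup>* a b"
  shows "R\<^sup>*\<^sup>* b a"
  using assms(2)
  by (induction rule: rtranclp_induct) (auto intro: converse_rtranclp_into_rtranclp assms(1))

lemma is_cycle_alt:
  "is_cycle V E c \<longleftrightarrow> 3 \<le> length c \<and> distinct c \<and> set c \<subseteq> V \<and> successively E c \<and> E (last c) (hd c)"
proof -
  have *: "(\<forall>i < length c. E (c ! i) (c ! ((i + 1) mod length c))) \<longleftrightarrow>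
        successively E c \<and> E (last c) (hd c)" if "3 \<le> length c"
  proof
    assume a: "\<forall>i < length c. E (c ! i) (c ! ((i + 1) mod length c))"
    have "successively E c"
      unfolding successively_conv_nth
    proof (intro allI impI)
      fix i assume "Suc i < length c"
      then show "E (c ! i) (c ! Suc i)" using a[rule_format, of i] by simp
    qed
    moreover have "E (last c) (hd c)"
    proof -
      have s: "Suc (length c - Suc 0) = length c" using that by simp
      have ne: "c \<noteq> []" using that by auto
      show ?thesis using a[rule_format, of "length c - 1"] that s
          by (simp add: last_conv_nth[OF ne] hd_conv_nth[OF ne])
    qed
    ultimately show "successively E c \<and> E (last c) (hd c)" by blast
  next
    assume a: "successively E c \<and> E (last c) (hd c)"
    show "\<forall>i < length c. E (c ! i) (c ! ((i + 1) mod length c))"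
    proof (intro allI impI)
      fix i assume i: "i < length c"
      show "E (c ! i) (c ! ((i + 1) mod length c))"
      proof (cases "Suc i < length c")
        case True then show ?thesis using successively_nth a by fastforce
      next
        case False
        then have "i = length c - 1" using i by simp
        have ne: "c \<noteq> []" using that by auto
        have "Suc (length c - Suc 0) = length c" using that by simp
        then show ?thesis using a that \<open>i = _\<close> by (simp add: last_conv_nth[OF ne] hd_conv_nth[OF ne])
      qed
    qed
  qed
  show ?thesis unfolding is_cycle_def using * by blast
qed

definition sep :: "('a \<Rightarrow> 'a \<Rightarrow> bool) \<Rightarrow> 'a set \<Rightarrow> 'a set \<Rightarrow> 'a set \<Rightarrow> bool" where
  "sep E A B X \<longleftrightarrow> (\<forall>a\<in>A-X. \<forall>b\<in>B-X. \<not> (RW E (-X))\<^sup>*\<^sup>* a b)"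

definition abpath :: "('a \<Rightarrow> 'a \<Rightarrow> bool) \<Rightarrow> 'a set \<Rightarrow> 'a set \<Rightarrow> 'a list \<Rightarrow> bool" where
  "abpath E A B p \<longleftrightarrow> p \<noteq> [] \<and> distinct p \<and> successively E p \<and> hd p \<in> A \<and> last p \<in> B \<and>
     (\<forall>x\<in>set (tl p). x \<notin> A) \<and> (\<forall>x\<in>set (butlast p). x \<notin> B)"

lemma rw_reach_cases: "(RW R W)\<^sup>*\<^sup>* a v \<Longrightarrow> v = a \<or> v \<in> W"
  by (induction rule: rtranclp_induct) (auto simp: RW_def)

lemma rw_mono:
  assumes "(RW R W)\<^sup>*\<^sup>* a b" "W \<subseteq> W'" "\<And>u v. R u v \<Longrightarrow> R' u v"
  shows "(RW R' W')\<^sup>*\<^sup>* a b"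
  using assms(1) by (rule rtranclp_mono[THEN predicate2D, rotated]) (use assms(2,3) in \<open>auto simp: RW_def\<close>)

lemma closure_reach:
  assumes "\<And>v w. v \<in> L \<Longrightarrow> R v w \<Longrightarrow> w \<in> L" "a \<in> L" "R\<^sup>*\<^sup>* a b"
  shows "b \<in> L"
  using assms(3,2) by (induction rule: rtranclp_induct) (auto intro: assms(1))

lemma rw_sym:
  assumes "\<And>u v. R u v \<Longrightarrow> R v u" "(RW R W)\<^sup>*\<^sup>* a b"
  shows "(RW R W)\<^sup>*\<^sup>* b a"
  using assms(2) by (rule rtranclp_sym[rotated]) (auto simp: RW_def intro: assms(1))

lemma sep_sym:
  assumes "\<And>u v. R u v \<Longrightarrow> R v u"
  shows "sep R A B X \<longleftrightarrow> sep R B A X"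
proof -
  have "\<And>a b. (RW R (-X))\<^sup>*\<^sup>* a b \<Longrightarrow> (RW R (-X))\<^sup>*\<^sup>* b a"
    by (rule rw_sym) (use assms in auto)
  then show ?thesis unfolding sep_def by blast
qed

lemma abpath_rev:
  assumes "\<And>u v. R u v \<Longrightarrow> R v u" "abpath R A B p"
  shows "abpath R B A (rev p)"
proof -
  have "successively R (rev p)" using assms
    by (auto simp: abpath_def intro: successively_mono)
  moreover have "set (tl (rev p)) = set (butlast p)"
    by (metis butlast_rev rev_rev_ident set_rev)
  moreover have "set (butlast (rev p)) = set (tl p)"
    by (simp add: butlast_rev)
  ultimately show ?thesis using assms(2)
    by (auto simp: abpath_def hd_rev last_rev)
qed

lemma abpath_mono:
  assumes "abpath R A B p" "\<And>u v. R u v \<Longrightarrow> R' u v"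
  shows "abpath R' A B p"
  using assms by (auto simp: abpath_def intro: successively_mono)

lemma extract_abpath:
  assumes "a \<in> A" "b \<in> B" "(RW E W)\<^sup>*\<^sup>* a b" "a \<in> W"
  shows "\<exists>p. abpath E A B p \<and> set p \<subseteq> W"
proof -
  obtain p where p: "p \<noteq> []" "hd p = a" "last p = b" "successively (RW E W) p" "distinct p"
    using walk_to_path[OF assms(3)] by blast
  have pW: "set p \<subseteq> W"
  proof
    fix v assume "v \<in> set p"
    then have "(RW E W)\<^sup>*\<^sup>* a v" using path_reach[OF p(4,1)] p(2) by simp
    then show "v \<in> W" using rw_reach_cases assms(4) by fastforce
  qed
  have pE: "successively E p" using p(4) by (auto simp: RW_def intro: successively_mono)
  have exA: "\<exists>x\<in>set p. x \<in> A" using p assms(1) hd_in_set by blast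
  obtain u y w where uyw: "p = u @ y # w" "y \<in> A" "\<forall>z\<in>set w. z \<notin> A"
    using split_list_last_prop[OF exA] by blast
  have "last (y # w) = b" using p(3) uyw(1) by simp
  then have exB: "\<exists>x\<in>set (y # w). x \<in> B"
    using assms(2) last_in_set by (metis list.distinct(1))
  obtain u' z w' where uzw: "y # w = u' @ z # w'" "z \<in> B" "\<forall>v\<in>set u'. v \<notin> B"
    using split_list_first_prop[OF exB] by blast
  define q where "q = u' @ [z]"
  have "distinct (y # w)" using p(5) uyw(1) by simp
  hence dq: "distinct q" unfolding q_def using uzw(1) by simp
  have sq: "successively E (y # w)" using pE uyw(1) by (simp add: successively_append_iff)
  hence "successively E (u' @ [z] @ w')" using uzw(1) by simp
  hence sq2: "successively E q" unfolding q_def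
    by (simp only: successively_append_iff append_assoc[symmetric])
  have hq: "hd q = y" using uzw(1) q_def by (cases u') auto
  have tq: "set (tl q) \<subseteq> set w"
    using uzw(1) q_def by (cases u') auto
  have bq: "butlast q = u'" using q_def by simp
  have "set q \<subseteq> set (y # w)" using uzw(1) q_def by auto
  hence qp: "set q \<subseteq> set p" using uyw(1) by auto
  have "abpath E A B q"
    unfolding abpath_def
  proof (intro conjI)
    show "hd q \<in> A" using hq uyw(2) by simp
    show "last q \<in> B" using q_def uzw(2) by simp
    show "\<forall>x\<in>set (tl q). x \<notin> A" using tq uyw(3) by blast
    show "\<forall>x\<in>set (butlast q). x \<notin> B" using bq uzw(3) by simp
  qed (use dq sq2 q_def in auto)
  then show ?thesis using qp pW by blast
qed

lemma abpath_reach: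
  assumes "abpath E A B p" "set p \<inter> X = {}"
  shows "(RW E (-X))\<^sup>*\<^sup>* (hd p) (last p)"
proof -
  have "successively (RW E (-X)) p" using assms
    by (intro successively_RW) (auto simp: abpath_def)
  then show ?thesis using path_reach_last assms(1) by (auto simp: abpath_def)
qed

lemma abpath_sep:
  assumes "abpath E A B p" "set p \<inter> X = {}" "sep E A B X"
  shows False
proof -
  have ne: "p \<noteq> []" using assms(1) by (simp add: abpath_def)
  show False using abpath_reach[OF assms(1,2)] assms hd_in_set[OF ne] last_in_set[OF ne]
    unfolding sep_def abpath_def by blast
qed

definition LS :: "('a \<Rightarrow> 'a \<Rightarrow> bool) \<Rightarrow> 'a set \<Rightarrow> 'a set \<Rightarrow> 'a set" where
  "LS R P S = {v. \<exists>a\<in>P-S. (RW R (-S))\<^sup>*\<^sup>* a v}"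

lemma LS_notin: "v \<in> LS R P S \<Longrightarrow> v \<notin> S"
  unfolding LS_def using rw_reach_cases by fastforce

lemma LS_base: "a \<in> P - S \<Longrightarrow> a \<in> LS R P S"
  unfolding LS_def by blast

lemma LS_step: "v \<in> LS R P S \<Longrightarrow> R v w \<Longrightarrow> w \<notin> S \<Longrightarrow> w \<in> LS R P S"
proof -
  assume v: "v \<in> LS R P S" and "R v w" "w \<notin> S"
  then obtain a where a: "a \<in> P - S" "(RW R (-S))\<^sup>*\<^sup>* a v" unfolding LS_def by blast
  have "RW R (-S) v w" using LS_notin[OF v] \<open>R v w\<close> \<open>w \<notin> S\<close> by (simp add: RW_def)
  then have "(RW R (-S))\<^sup>*\<^sup>* a w" using a(2) by (rule rtranclp.rtrancl_into_rtrancl[rotated])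
  then show ?thesis using a(1) unfolding LS_def by blast
qed

lemma LS_disj:
  assumes "sep R A B S" "\<And>u v. R u v \<Longrightarrow> R v u"
  shows "LS R A S \<inter> LS R B S = {}"
proof (rule ccontr)
  assume "LS R A S \<inter> LS R B S \<noteq> {}"
  then obtain v a b where "a \<in> A - S" "b \<in> B - S" "(RW R (-S))\<^sup>*\<^sup>* a v" "(RW R (-S))\<^sup>*\<^sup>* b v"
    unfolding LS_def by blast
  moreover have "(RW R (-S))\<^sup>*\<^sup>* v b" using rw_sym[of R, OF assms(2)] calculation(4) by blast
  ultimately show False using assms(1) unfolding sep_def by (meson rtranclp_trans)
qed

lemma LS_sepB:
  assumes "sep R A B S"
  shows "LS R A S \<inter> B = {}"
  using assms LS_notin unfolding sep_def LS_def by fastforce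

lemma bl_reach:
  assumes "abpath R A T p" "S \<subseteq> T"
  shows "set (butlast p) \<subseteq> LS R A S"
proof (cases "butlast p = []")
  case True then show ?thesis by simp
next
  case False
  have p: "p \<noteq> []" "successively R p" "hd p \<in> A" "\<forall>x\<in>set (butlast p). x \<notin> T"
    using assms(1) by (auto simp: abpath_def)
  have hb: "hd (butlast p) = hd p" using False p(1)
    by (metis append_butlast_last_id hd_append2)
  have sb: "successively R (butlast p)" using p(2) p(1)
    by (metis append_butlast_last_id successively_append_iff)
  have "successively (RW R (-S)) (butlast p)"
    using sb p(4) assms(2) by (intro successively_RW) auto
  moreover have "hd p \<in> A - S" using p(3,4) hb False assms(2)
    by (metis DiffI hd_in_set subsetD)
  ultimately show ?thesis unfolding LS_def
  proof (intro subsetI CollectI)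
    fix v assume "successively (RW R (-S)) (butlast p)" "hd p \<in> A - S" "v \<in> set (butlast p)"
    then have "(RW R (-S))\<^sup>*\<^sup>* (hd (butlast p)) v" using path_reach False by metis
    then show "\<exists>a\<in>A - S. (RW R (-S))\<^sup>*\<^sup>* a v" using \<open>hd p \<in> A - S\<close> hb by auto
  qed
qed

lemma tl_reach:
  assumes "abpath R T B r" "S \<subseteq> T" "\<And>u v. R u v \<Longrightarrow> R v u"
  shows "set (tl r) \<subseteq> LS R B S"
proof -
  have "abpath R B T (rev r)" by (rule abpath_rev[OF assms(3) assms(1)])
  then have "set (butlast (rev r)) \<subseteq> LS R B S" using assms(2) by (rule bl_reach)
  moreover have "set (butlast (rev r)) = set (tl r)" by (simp add: butlast_rev)
  ultimately show ?thesis by simp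
qed

lemma join_succ:
  assumes "successively R xs" "successively R ys" "xs \<noteq> []" "last xs = hd ys"
  shows "successively R (xs @ tl ys)"
  using assms by (cases ys) (auto simp: successively_append_iff successively_Cons)

lemma sep_transfer:
  assumes Erem: "\<And>u v. E' u v \<longleftrightarrow> E u v \<and> {u,v} \<noteq> {x,y}"
    and yA: "y \<notin> LS E' A S"
    and sepS: "sep E' A B S"
    and sepX: "sep E' A (insert x S) X"
  shows "sep E A B X"
  unfolding sep_def
proof (intro ballI notI)
  fix a b assume a: "a \<in> A - X" and b: "b \<in> B - X" and r: "(RW E (-X))\<^sup>*\<^sup>* a b"
  have aS: "a \<notin> insert x S"
  proof
    assume "a \<in> insert x S"
    then have "a \<in> insert x S - X" using a by blast
    moreover have "(RW E' (-X))\<^sup>*\<^sup>* a a" by simp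
    ultimately show False using sepX a unfolding sep_def by blast
  qed
  define L where "L = {v. (RW E' (-(X \<union> insert x S)))\<^sup>*\<^sup>* a v}"
  have Lout: "v \<notin> X \<union> insert x S" if "v \<in> L" for v
  proof -
    have "v = a \<or> v \<in> -(X \<union> insert x S)" using that rw_reach_cases unfolding L_def by fastforce
    then show ?thesis using aS a by blast
  qed
  have LA: "v \<in> LS E' A S" if "v \<in> L" for v
  proof -
    have "(RW E' (-(X \<union> insert x S)))\<^sup>*\<^sup>* a v" using that unfolding L_def by simp
    then have "(RW E' (-S))\<^sup>*\<^sup>* a v" by (rule rw_mono) auto
    then show ?thesis using aS a unfolding LS_def by blast
  qed
  have LX: "(RW E' (-X))\<^sup>*\<^sup>* a v" if "v \<in> L" for v
  proof -
    have "(RW E' (-(X \<union> insert x S)))\<^sup>*\<^sup>* a v" using that unfolding L_def by simp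
    then show ?thesis by (rule rw_mono) auto
  qed
  have cl: "w \<in> L" if v: "v \<in> L" and st: "RW E (-X) v w" for v w
  proof -
    have E: "E v w" "w \<notin> X" using st by (auto simp: RW_def)
    show "w \<in> L"
    proof (cases "E' v w")
      case True
      show ?thesis
      proof (cases "w \<in> insert x S")
        case True
        have "RW E' (-X) v w" using \<open>E' v w\<close> Lout[OF v] E(2) by (simp add: RW_def)
        then have "(RW E' (-X))\<^sup>*\<^sup>* a w" using LX[OF v] by (meson rtranclp.rtrancl_into_rtrancl)
        moreover have "w \<in> insert x S - X" using True E(2) by blast
        moreover have "a \<in> A - X" using a by blast
        ultimately show ?thesis using sepX unfolding sep_def by blast
      next
        case False
        have "RW E' (-(X \<union> insert x S)) v w" using \<open>E' v w\<close> Lout[OF v] E(2) False by (simp add: RW_def)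
        moreover have "(RW E' (-(X \<union> insert x S)))\<^sup>*\<^sup>* a v" using v unfolding L_def by simp
        ultimately have "(RW E' (-(X \<union> insert x S)))\<^sup>*\<^sup>* a w" by (simp add: rtranclp.rtrancl_into_rtrancl)
        then show ?thesis unfolding L_def by simp
      qed
    next
      case False
      then have "{v,w} = {x,y}" using Erem[of v w] E(1) by simp
      moreover have "v \<noteq> x" using Lout[OF v] by blast
      ultimately have "v = y" by (auto simp: doubleton_eq_iff)
      then show ?thesis using LA[OF v] yA by blast
    qed
  qed
  have aL: "a \<in> L" unfolding L_def by simp
  have bL: "b \<in> L" by (rule closure_reach[of L "RW E (-X)", OF cl aL r])
  then have "b \<in> LS E' A S" using LA by blast
  then show False using LS_sepB[OF sepS] b by blast
qed

lemma side:
  assumes Erem: "\<And>u v. E' u v \<longleftrightarrow> E u v \<and> {u,v} \<noteq> {x,y}"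
    and a: "a \<in> P - S" and r: "(RW E (-S))\<^sup>*\<^sup>* a b" and b: "b \<notin> LS E' P S"
  shows "(x \<in> LS E' P S) \<noteq> (y \<in> LS E' P S)"
proof
  assume eq: "(x \<in> LS E' P S) = (y \<in> LS E' P S)"
  have cl: "w \<in> LS E' P S" if v: "v \<in> LS E' P S" and st: "RW E (-S) v w" for v w
  proof (cases "E' v w")
    case True
    then show ?thesis using LS_step[OF v] st by (auto simp: RW_def)
  next
    case False
    then have "{v,w} = {x,y}" using Erem[of v w] st by (simp add: RW_def)
    then show ?thesis using eq v by (auto simp: doubleton_eq_iff)
  qed
  have "b \<in> LS E' P S" using closure_reach[of "LS E' P S" "RW E (-S)", OF cl LS_base[OF a] r] .
  then show False using b by blast
qed

lemma set_butlast_last: "p \<noteq> [] \<Longrightarrow> set p = insert (last p) (set (butlast p))"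
proof -
  assume "p \<noteq> []"
  then have "set p = set (butlast p @ [last p])" by simp
  then show ?thesis by simp
qed

lemma set_hd_tl: "p \<noteq> [] \<Longrightarrow> set p = insert (hd p) (set (tl p))"
  by (cases p) auto

lemma combine0:
  assumes symE0: "\<forall>u v. E' u v \<longrightarrow> E' v u" and sub0: "\<forall>u v. E' u v \<longrightarrow> E u v" and Exy: "E x y"
    and sepS: "sep E' A B S" and sS: "s \<in> S"
    and xA: "x \<in> LS E' A S" and yB: "y \<in> LS E' B S"
    and p1: "abpath E' A T p1" and p2: "abpath E' A T p2" and ST: "S \<subseteq> T"
    and lp1: "last p1 = s" and lp2: "last p2 = x"
    and r1: "abpath E' U B r1" and r2: "abpath E' U B r2" and SU: "S \<subseteq> U"
    and hr1: "hd r1 = s" and hr2: "hd r2 = y"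
    and d12: "set p1 \<inter> set p2 = {}" and dr: "set r1 \<inter> set r2 = {}"
  shows "\<exists>p q. abpath E A B p \<and> abpath E A B q \<and> set p \<inter> set q = {}"
proof -
  have symE': "\<And>u v. E' u v \<Longrightarrow> E' v u" and sub: "\<And>u v. E' u v \<Longrightarrow> E u v"
    using symE0 sub0 by blast+
  define LA where "LA = LS E' A S"
  define LB where "LB = LS E' B S"
  have bp1: "set (butlast p1) \<subseteq> LA" unfolding LA_def using p1 ST by (rule bl_reach)
  have bp2: "set (butlast p2) \<subseteq> LA" unfolding LA_def using p2 ST by (rule bl_reach)
  have tr1: "set (tl r1) \<subseteq> LB" unfolding LB_def using r1 SU symE' by (rule tl_reach)
  have tr2: "set (tl r2) \<subseteq> LB" unfolding LB_def using r2 SU symE' by (rule tl_reach)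
  have dAB: "LA \<inter> LB = {}" unfolding LA_def LB_def using sepS symE' by (rule LS_disj)
  have LAB: "LA \<inter> B = {}" unfolding LA_def using sepS by (rule LS_sepB)
  have "sep E' B A S" using sepS sep_sym[of E' A B S] symE' by blast
  then have LBA: "LB \<inter> A = {}" unfolding LB_def by (rule LS_sepB)
  have sA: "s \<notin> LA" "s \<notin> LB" unfolding LA_def LB_def using LS_notin[of s E' _ S] sS by blast+
  have ne: "p1 \<noteq> []" "p2 \<noteq> []" "r1 \<noteq> []" "r2 \<noteq> []" using p1 p2 r1 r2 by (auto simp: abpath_def)
  have sp1: "set p1 = insert s (set (butlast p1))" using set_butlast_last[OF ne(1)] lp1 by simp
  have sp2: "set p2 = insert x (set (butlast p2))" using set_butlast_last[OF ne(2)] lp2 by simp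
  have sr1: "set r1 = insert s (set (tl r1))" using set_hd_tl[OF ne(3)] hr1 by simp
  have sr2: "set r2 = insert y (set (tl r2))" using set_hd_tl[OF ne(4)] hr2 by simp
  have xA': "x \<in> LA" using xA LA_def by simp
  have yB': "y \<in> LB" using yB LB_def by simp
  have p2LA: "set p2 \<subseteq> LA" unfolding sp2 using bp2 xA' by simp
  have r2LB: "set r2 \<subseteq> LB" unfolding sr2 using tr2 yB' by simp
  have P1: "distinct p1" "successively E' p1" "hd p1 \<in> A" "\<forall>z\<in>set (tl p1). z \<notin> A"
    using p1 by (auto simp: abpath_def)
  have P2: "distinct p2" "successively E' p2" "hd p2 \<in> A" "\<forall>z\<in>set (tl p2). z \<notin> A"
    using p2 by (auto simp: abpath_def)
  have R1: "distinct r1" "successively E' r1" "last r1 \<in> B" "\<forall>z\<in>set (butlast r1). z \<notin> B"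
    using r1 by (auto simp: abpath_def)
  have R2: "distinct r2" "successively E' r2" "last r2 \<in> B" "\<forall>z\<in>set (butlast r2). z \<notin> B"
    using r2 by (auto simp: abpath_def)
  define q1 where "q1 = p1 @ tl r1"
  define q2 where "q2 = p2 @ r2"
  have "abpath E A B q1"
    unfolding abpath_def
  proof (intro conjI)
    show "q1 \<noteq> []" using ne q1_def by simp
    have "set p1 \<inter> set (tl r1) = {}" unfolding sp1 using bp1 tr1 dAB sA by blast
    then show "distinct q1" unfolding q1_def using P1(1) R1(1) by (simp add: distinct_tl)
    have "successively E' q1" unfolding q1_def
      by (rule join_succ[OF P1(2) R1(2) ne(1)]) (simp add: lp1 hr1)
    then show "successively E q1" by (rule successively_mono) (rule sub)
    show "hd q1 \<in> A" using P1(3) ne q1_def by simp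
    show "last q1 \<in> B"
    proof (cases "tl r1 = []")
      case True
      then have "last r1 = s" using hr1 ne(3) by (cases r1) auto
      then show ?thesis using True q1_def lp1 R1(3) by simp
    next
      case False
      then have "last (tl r1) = last r1" by (cases r1) auto
      then show ?thesis using False q1_def R1(3) by simp
    qed
    show "\<forall>z\<in>set (tl q1). z \<notin> A"
    proof
      fix z assume "z \<in> set (tl q1)"
      then have "z \<in> set (tl p1) \<or> z \<in> set (tl r1)" using ne(1) q1_def by (cases p1) auto
      then show "z \<notin> A" using P1(4) tr1 LBA by blast
    qed
    show "\<forall>z\<in>set (butlast q1). z \<notin> B"
    proof (cases "tl r1 = []")
      case True
      then show ?thesis using q1_def bp1 LAB by auto
    next
      case False
      then have br: "butlast r1 = s # butlast (tl r1)" using hr1 ne(3) by (cases r1) auto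
      have "butlast q1 = p1 @ butlast (tl r1)" using False q1_def by (simp add: butlast_append)
      then have "set (butlast q1) \<subseteq> set (butlast p1) \<union> set (butlast r1)" using sp1 br by auto
      then show ?thesis using bp1 LAB R1(4) by blast
    qed
  qed
  moreover have "abpath E A B q2"
    unfolding abpath_def
  proof (intro conjI)
    show "q2 \<noteq> []" using ne q2_def by simp
    show "distinct q2" unfolding q2_def using P2(1) R2(1) p2LA r2LB dAB by auto
    have "successively E' p2" "successively E' r2" by (fact P2(2), fact R2(2))
    then have "successively E p2" "successively E r2" by (auto intro: successively_mono sub)
    then show "successively E q2" unfolding q2_def using lp2 hr2 Exy
      by (simp add: successively_append_iff)
    show "hd q2 \<in> A" using P2(3) ne q2_def by simp
    show "last q2 \<in> B" using R2(3) ne q2_def by simp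
    show "\<forall>z\<in>set (tl q2). z \<notin> A"
    proof
      fix z assume "z \<in> set (tl q2)"
      then have "z \<in> set (tl p2) \<or> z \<in> set r2" using ne(2) q2_def by (cases p2) auto
      then show "z \<notin> A" using P2(4) r2LB LBA by blast
    qed
    show "\<forall>z\<in>set (butlast q2). z \<notin> B"
    proof
      fix z assume "z \<in> set (butlast q2)"
      then have "z \<in> set p2 \<or> z \<in> set (butlast r2)" using ne(4) q2_def by (simp add: butlast_append)
      then show "z \<notin> B" using p2LA LAB R2(4) by blast
    qed
  qed
  moreover have "set q1 \<inter> set q2 = {}"
  proof -
    have e1: "set q1 = set p1 \<union> set (tl r1)" "set q2 = set p2 \<union> set r2" using q1_def q2_def by auto
    have "set (tl r1) \<subseteq> set r1" using sr1 by blast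
    then have a1: "set (tl r1) \<inter> set r2 = {}" using dr by blast
    have a2: "set (tl r1) \<inter> set p2 = {}" using tr1 p2LA dAB by blast
    have a3: "set p1 \<inter> set r2 = {}"
    proof -
      have "set (butlast p1) \<inter> set r2 = {}" using bp1 r2LB dAB by blast
      moreover have "s \<notin> set r2" using r2LB sA by blast
      ultimately show ?thesis unfolding sp1 by simp
    qed
    show ?thesis unfolding e1 using a1 a2 a3 d12 by blast
  qed
  ultimately show ?thesis by blast
qed

lemma combine1:
  assumes symE': "\<forall>u v. E' u v \<longrightarrow> E' v u" and sub: "\<forall>u v. E' u v \<longrightarrow> E u v" and Exy: "E x y"
    and sepS: "sep E' A B S" and S: "S = {s}" and xs: "x \<noteq> s" and ys: "y \<noteq> s"
    and xA: "x \<in> LS E' A S" and yB: "y \<in> LS E' B S"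
    and p1: "abpath E' A (insert x S) p1" and p2: "abpath E' A (insert x S) p2"
    and r1: "abpath E' (insert y S) B r1" and r2: "abpath E' (insert y S) B r2"
    and d12: "set p1 \<inter> set p2 = {}" and dr: "set r1 \<inter> set r2 = {}"
  shows "\<exists>p q. abpath E A B p \<and> abpath E A B q \<and> set p \<inter> set q = {}"
proof -
  have ne: "p1 \<noteq> []" "p2 \<noteq> []" "r1 \<noteq> []" "r2 \<noteq> []" using p1 p2 r1 r2 by (auto simp: abpath_def)
  have lp: "last p1 \<in> {x, s}" "last p2 \<in> {x, s}" using p1 p2 S by (auto simp: abpath_def)
  have hr: "hd r1 \<in> {y, s}" "hd r2 \<in> {y, s}" using r1 r2 S by (auto simp: abpath_def)
  have lpd: "last p1 \<noteq> last p2" using d12 last_in_set ne(1,2) by (metis disjoint_iff)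
  have hrd: "hd r1 \<noteq> hd r2" using dr hd_in_set ne(3,4) by (metis disjoint_iff)
  have sS: "s \<in> S" "S \<subseteq> insert x S" "S \<subseteq> insert y S" using S by auto
  have d21: "set p2 \<inter> set p1 = {}" "set r2 \<inter> set r1 = {}" using d12 dr by blast+
  note c = combine0[OF symE' sub Exy sepS sS(1) xA yB]
  show ?thesis
  proof (cases "last p1 = s")
    case True
    then have lp2: "last p2 = x" using lp lpd by auto
    show ?thesis
    proof (cases "hd r1 = s")
      case True
      moreover have "hd r2 = y" using True hr hrd by auto
      ultimately show ?thesis using c[OF p1 p2 sS(2) \<open>last p1 = s\<close> lp2 r1 r2 sS(3)] d12 dr by blast
    next
      case False
      then have "hd r1 = y" "hd r2 = s" using hr hrd by auto
      then show ?thesis using c[OF p1 p2 sS(2) \<open>last p1 = s\<close> lp2 r2 r1 sS(3)] d12 d21(2) by blast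
    qed
  next
    case False
    then have lp2: "last p1 = x" "last p2 = s" using lp lpd by auto
    show ?thesis
    proof (cases "hd r1 = s")
      case True
      moreover have "hd r2 = y" using True hr hrd by auto
      ultimately show ?thesis using c[OF p2 p1 sS(2) lp2(2) lp2(1) r1 r2 sS(3)] d21(1) dr by blast
    next
      case False
      then have "hd r1 = y" "hd r2 = s" using hr hrd by auto
      then show ?thesis using c[OF p2 p1 sS(2) lp2(2) lp2(1) r2 r1 sS(3)] d21(1) d21(2) by blast
    qed
  qed
qed

lemma sep_ins:
  assumes Erem: "\<And>u v. E' u v \<longleftrightarrow> E u v \<and> {u,v} \<noteq> {x,y}" and sepS: "sep E' A B S"
  shows "sep E A B (insert x S)"
  unfolding sep_def
proof (intro ballI notI)
  fix a b assume a: "a \<in> A - insert x S" and b: "b \<in> B - insert x S"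
    and r: "(RW E (- insert x S))\<^sup>*\<^sup>* a b"
  have "(RW E' (-S))\<^sup>*\<^sup>* a b"
  proof (rule rtranclp_mono[THEN predicate2D, OF _ r])
    show "RW E (- insert x S) \<le> RW E' (- S)"
    proof (intro predicate2I)
      fix u v assume "RW E (- insert x S) u v"
      then have "E u v" "u \<noteq> x" "v \<noteq> x" "u \<notin> S" "v \<notin> S" by (auto simp: RW_def)
      moreover have "{u,v} \<noteq> {x,y}" using calculation(2,3) by (auto simp: doubleton_eq_iff)
      ultimately show "RW E' (- S) u v" using Erem[of u v] by (simp add: RW_def)
    qed
  qed
  moreover have "a \<in> A - S" "b \<in> B - S" using a b by auto
  ultimately show False using sepS unfolding sep_def by blast
qed

lemma no_edge_reach:
  assumes "\<forall>u v. \<not> E u v" "(RW E W)\<^sup>*\<^sup>* a b"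
  shows "a = b"
  using assms(2) by (induction rule: rtranclp_induct) (use assms(1) in \<open>auto simp: RW_def\<close>)

lemma two_elems:
  assumes "finite X" "2 \<le> card X"
  obtains a b where "a \<in> X" "b \<in> X" "a \<noteq> b"
proof -
  have "\<not> card X \<le> Suc 0" using assms by simp
  then show ?thesis using card_le_Suc0_iff_eq[OF assms(1)] that by blast
qed

lemma menger2_aux:
  assumes "graph V E" "A \<subseteq> V" "B \<subseteq> V" "\<forall>X. X \<subseteq> V \<longrightarrow> sep E A B X \<longrightarrow> 2 \<le> card X"
    "card {(u,v). E u v} = n"
  shows "\<exists>p q. abpath E A B p \<and> abpath E A B q \<and> set p \<inter> set q = {}"
  using assms
proof (induction n arbitrary: E A B rule: less_induct)
  case (less n)
  note G = less.prems(1) and AV = less.prems(2) and BV = less.prems(3) and H = less.prems(4)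
  have finV: "finite V" using G by (simp add: graph_def)
  have Esym: "\<forall>u v. E u v \<longrightarrow> E v u" and Ein: "\<And>u v. E u v \<Longrightarrow> u \<in> V \<and> v \<in> V \<and> u \<noteq> v"
    using G by (auto simp: graph_def)
  have Esym': "\<And>u v. E u v \<Longrightarrow> E v u" using Esym by blast
  show ?case
  proof (cases "\<exists>x y. E x y")
    case False
    then have noE: "\<forall>u v. \<not> E u v" by blast
    have "sep E A B (A \<inter> B)"
      unfolding sep_def using no_edge_reach[OF noE] by blast
    moreover have "A \<inter> B \<subseteq> V" using AV by blast
    ultimately have "2 \<le> card (A \<inter> B)" using H by blast
    moreover have "finite (A \<inter> B)" using finV AV finite_subset by blast
    ultimately obtain a1 a2 where "a1 \<in> A \<inter> B" "a2 \<in> A \<inter> B" "a1 \<noteq> a2" using two_elems by blast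
    then have "abpath E A B [a1]" "abpath E A B [a2]" "set [a1] \<inter> set [a2] = {}"
      by (auto simp: abpath_def)
    then show ?thesis by blast
  next
    case True
    then obtain x y where Exy: "E x y" by blast
    define E' where "E' = (\<lambda>u v. E u v \<and> {u,v} \<noteq> {x,y})"
    have Erem: "\<And>u v. E' u v \<longleftrightarrow> E u v \<and> {u,v} \<noteq> {x,y}" unfolding E'_def by simp
    have symE': "\<forall>u v. E' u v \<longrightarrow> E' v u" unfolding E'_def using Esym by (auto simp: insert_commute)
    have symE'': "\<And>u v. E' u v \<Longrightarrow> E' v u" using symE' by blast
    have subE: "\<forall>u v. E' u v \<longrightarrow> E u v" unfolding E'_def by blast
    have G': "graph V E'" using G unfolding graph_def E'_def by (auto simp: insert_commute)
    have finE: "finite {(u,v). E u v}"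
      by (rule finite_subset[of _ "V \<times> V"]) (use Ein finV in auto)
    have "{(u,v). E' u v} \<subset> {(u,v). E u v}"
    proof
      show "{(u,v). E' u v} \<subseteq> {(u,v). E u v}" using subE by blast
      have "(x,y) \<notin> {(u,v). E' u v}" unfolding E'_def by simp
      then show "{(u,v). E' u v} \<noteq> {(u,v). E u v}" using Exy by blast
    qed
    then have lessn: "card {(u,v). E' u v} < n" using psubset_card_mono[OF finE] less.prems(5) by simp
    show ?thesis
    proof (cases "\<forall>X. X \<subseteq> V \<longrightarrow> sep E' A B X \<longrightarrow> 2 \<le> card X")
      case True
      from less.IH[OF lessn G' AV BV True refl] obtain p q where
        "abpath E' A B p" "abpath E' A B q" "set p \<inter> set q = {}" by blast
      then show ?thesis using abpath_mono[of E' A B _ E] subE by blast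
    next
      case False
      then obtain S where SV: "S \<subseteq> V" and sepS: "sep E' A B S" and cS: "card S < 2" by force
      have finS: "finite S" using SV finV finite_subset by blast
      have xyV: "x \<in> V" "y \<in> V" "x \<noteq> y" using Ein[OF Exy] by auto
      have Erem2: "\<And>u v. E' u v \<longleftrightarrow> E u v \<and> {u,v} \<noteq> {y,x}" using Erem by (simp add: insert_commute)
      have s1: "sep E A B (insert x S)" by (rule sep_ins[OF Erem sepS])
      have s2: "sep E A B (insert y S)" by (rule sep_ins[OF Erem2 sepS])
      have c1: "2 \<le> card (insert x S)" using H s1 SV xyV by blast
      have c2: "2 \<le> card (insert y S)" using H s2 SV xyV by blast
      have xS: "x \<notin> S" using c1 cS by (metis insert_absorb not_le)
      have yS: "y \<notin> S" using c2 cS by (metis insert_absorb not_le)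
      have "card S = 1" using c1 cS card_insert_disjoint[OF finS xS] by simp
      then obtain s where S: "S = {s}" using card_1_singletonE by blast
      have "\<not> sep E A B S"
      proof
        assume "sep E A B S"
        then have "2 \<le> card S" using H SV by blast
        then show False using cS by simp
      qed
      then obtain a b where ab: "a \<in> A - S" "b \<in> B - S" and rab: "(RW E (-S))\<^sup>*\<^sup>* a b"
        unfolding sep_def by blast
      have rba: "(RW E (-S))\<^sup>*\<^sup>* b a" using rw_sym[of E, OF Esym' rab] .
      define LA where "LA = LS E' A S"
      define LB where "LB = LS E' B S"
      have dAB: "LA \<inter> LB = {}" unfolding LA_def LB_def using sepS symE'' by (rule LS_disj)
      have aLA: "a \<in> LA" unfolding LA_def by (rule LS_base[OF ab(1)])
      have bLB: "b \<in> LB" unfolding LB_def by (rule LS_base[OF ab(2)])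
      have sideA: "(x \<in> LA) \<noteq> (y \<in> LA)" unfolding LA_def
        by (rule side[OF Erem ab(1) rab]) (use bLB dAB LA_def in blast)
      have sideB: "(x \<in> LB) \<noteq> (y \<in> LB)" unfolding LB_def
        by (rule side[OF Erem ab(2) rba]) (use aLA dAB LB_def in blast)
      have sepBA: "sep E' B A S" using sepS sep_sym[of E' A B S] symE'' by blast
      have key: "?thesis" if xy': "{x',y'} = {x,y}" and x'A: "x' \<in> LA" and y'B: "y' \<in> LB"
        and y'A: "y' \<notin> LA" and x'B: "x' \<notin> LB" for x' y'
      proof -
        have Erem': "\<And>u v. E' u v \<longleftrightarrow> E u v \<and> {u,v} \<noteq> {x',y'}" using Erem xy' by simp
        have Erem'': "\<And>u v. E' u v \<longleftrightarrow> E u v \<and> {u,v} \<noteq> {y',x'}" using Erem' by (simp add: insert_commute)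
        have x'y'V: "x' \<in> V" "y' \<in> V" "x' \<notin> S" "y' \<notin> S" using xy' xyV xS yS
          by (auto simp: doubleton_eq_iff)
        have Ex'y': "E x' y'" using xy' Exy Esym by (auto simp: doubleton_eq_iff)
        have x's: "x' \<noteq> s" "y' \<noteq> s" using x'y'V S by auto
        have h1: "\<forall>X. X \<subseteq> V \<longrightarrow> sep E' A (insert x' S) X \<longrightarrow> 2 \<le> card X"
        proof (intro allI impI)
          fix X assume "X \<subseteq> V" "sep E' A (insert x' S) X"
          then have "sep E A B X" using sep_transfer[OF Erem' _ sepS] y'A LA_def by blast
          then show "2 \<le> card X" using H \<open>X \<subseteq> V\<close> by blast
        qed
        have h2: "\<forall>X. X \<subseteq> V \<longrightarrow> sep E' B (insert y' S) X \<longrightarrow> 2 \<le> card X"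
        proof (intro allI impI)
          fix X assume "X \<subseteq> V" "sep E' B (insert y' S) X"
          then have "sep E B A X" using sep_transfer[OF Erem'' _ sepBA] x'B LB_def by blast
          then have "sep E A B X" using sep_sym[of E A B X] Esym' by blast
          then show "2 \<le> card X" using H \<open>X \<subseteq> V\<close> by blast
        qed
        have xsV: "insert x' S \<subseteq> V" "insert y' S \<subseteq> V" using SV x'y'V by auto
        obtain p1 p2 where p: "abpath E' A (insert x' S) p1" "abpath E' A (insert x' S) p2"
          "set p1 \<inter> set p2 = {}"
          using less.IH[OF lessn G' AV xsV(1) h1 refl] by blast
        obtain q1 q2 where q: "abpath E' B (insert y' S) q1" "abpath E' B (insert y' S) q2"
          "set q1 \<inter> set q2 = {}"
          using less.IH[OF lessn G' BV xsV(2) h2 refl] by blast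
        have r: "abpath E' (insert y' S) B (rev q1)" "abpath E' (insert y' S) B (rev q2)"
          "set (rev q1) \<inter> set (rev q2) = {}"
          using abpath_rev[OF symE'' q(1)] abpath_rev[OF symE'' q(2)] q(3) by auto
        show ?thesis
          by (rule combine1[OF symE' subE Ex'y' sepS S x's x'A[unfolded LA_def] y'B[unfolded LB_def]
                p(1) p(2) r(1) r(2) p(3) r(3)])
      qed
      show ?thesis
      proof (cases "x \<in> LA")
        case True
        then have "y \<notin> LA" "x \<notin> LB" using sideA dAB by auto
        then have "y \<in> LB" using sideB by auto
        then show ?thesis using key[of x y] True \<open>y \<notin> LA\<close> \<open>x \<notin> LB\<close> by blast
      next
        case False
        then have "y \<in> LA" using sideA by auto
        then have "y \<notin> LB" using dAB by auto
        then have "x \<in> LB" using sideB by auto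
        then show ?thesis using key[of y x] False \<open>y \<in> LA\<close> \<open>y \<notin> LB\<close>
          by (simp add: insert_commute)
      qed
    qed
  qed
qed

theorem menger2:
  assumes "graph V E" "A \<subseteq> V" "B \<subseteq> V" "\<forall>X. X \<subseteq> V \<longrightarrow> sep E A B X \<longrightarrow> 2 \<le> card X"
  shows "\<exists>p q. abpath E A B p \<and> abpath E A B q \<and> set p \<inter> set q = {}"
  using menger2_aux[OF assms refl] .

lemma mod_inj_aux: "(i + t1) mod L = (i + t2) mod (L::nat) \<Longrightarrow> t1 < L \<Longrightarrow> t2 < L \<Longrightarrow> t1 \<le> t2 \<Longrightarrow> t1 = t2"
proof -
  assume a: "(i + t1) mod L = (i + t2) mod (L::nat)" "t1 < L" "t2 < L" "t1 \<le> t2"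
  then have "L dvd (i + t2) - (i + t1)" using mod_eq_dvd_iff_nat[of "i+t1" "i+t2" L] by simp
  then have "L dvd t2 - t1" by simp
  moreover have "t2 - t1 < L" using a by simp
  ultimately have "t2 - t1 = 0" using dvd_imp_le by (metis not_less neq0_conv)
  then show ?thesis using a by simp
qed
lemma mod_inj: "(i + t1) mod L = (i + t2) mod (L::nat) \<Longrightarrow> t1 < L \<Longrightarrow> t2 < L \<Longrightarrow> t1 = t2"
  by (metis mod_inj_aux nat_le_linear)

definition fwd :: "'a list \<Rightarrow> nat \<Rightarrow> nat \<Rightarrow> 'a list" where
  "fwd c i m = map (\<lambda>t. c ! ((i + t) mod length c)) [0..<Suc m]"

lemma cyc_adj:
  assumes "is_cycle V E c" "a < length c"
  shows "E (c ! a) (c ! (Suc a mod length c))"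
  using assms unfolding is_cycle_def by simp

lemma fwd_props:
  assumes cyc: "is_cycle V E c" and m: "m < length c" and i: "i < length c"
  shows "distinct (fwd c i m)" "successively E (fwd c i m)" "set (fwd c i m) \<subseteq> set c"
    "hd (fwd c i m) = c ! i" "last (fwd c i m) = c ! ((i + m) mod length c)" "length (fwd c i m) = Suc m"
proof -
  let ?L = "length c"
  have L: "0 < ?L" using i by linarith
  have dc: "distinct c" using cyc by (simp add: is_cycle_def)
  show "distinct (fwd c i m)"
    unfolding fwd_def distinct_map
  proof
    show "distinct [0..<Suc m]" by simp
    show "inj_on (\<lambda>t. c ! ((i + t) mod ?L)) (set [0..<Suc m])"
    proof (rule inj_onI)
      fix t1 t2 assume t: "t1 \<in> set [0..<Suc m]" "t2 \<in> set [0..<Suc m]"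
        and eq: "c ! ((i + t1) mod ?L) = c ! ((i + t2) mod ?L)"
      have "(i + t1) mod ?L = (i + t2) mod ?L"
        using eq dc L nth_eq_iff_index_eq by (metis mod_less_divisor)
      moreover have "t1 < ?L" "t2 < ?L" using t m by auto
      ultimately show "t1 = t2" by (rule mod_inj)
    qed
  qed
  show "successively E (fwd c i m)"
    unfolding fwd_def successively_conv_nth
  proof (intro allI impI)
    fix t assume "Suc t < length (map (\<lambda>t. c ! ((i + t) mod ?L)) [0..<Suc m])"
    then have t: "Suc t < Suc m" by simp
    have "E (c ! ((i + t) mod ?L)) (c ! (Suc ((i + t) mod ?L) mod ?L))"
      using cyc_adj[OF cyc] L by simp
    moreover have "Suc ((i + t) mod ?L) mod ?L = (i + Suc t) mod ?L"
      by (simp add: mod_Suc_eq)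
    ultimately show "E (map (\<lambda>t. c ! ((i + t) mod ?L)) [0..<Suc m] ! t)
        (map (\<lambda>t. c ! ((i + t) mod ?L)) [0..<Suc m] ! Suc t)"
      using t by (simp del: upt_Suc)
  qed
  show "set (fwd c i m) \<subseteq> set c" unfolding fwd_def using L by auto
  show "hd (fwd c i m) = c ! i" unfolding fwd_def using i by (simp add: hd_map del: upt_Suc)
  show "last (fwd c i m) = c ! ((i + m) mod ?L)" unfolding fwd_def by (simp add: last_map del: upt_Suc)
  show "length (fwd c i m) = Suc m" unfolding fwd_def by simp
qed

lemma arc:
  assumes cyc: "is_cycle V E c" and i: "i < length c" and j: "j < length c" and ij: "i \<noteq> j"
    and sym: "\<And>u v. E u v \<Longrightarrow> E v u"
  shows "\<exists>\<alpha>. distinct \<alpha> \<and> set \<alpha> \<subseteq> set c \<and> successively E \<alpha> \<and> hd \<alpha> = c ! i \<and> last \<alpha> = c ! j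
      \<and> length c + 2 \<le> 2 * length \<alpha>"
proof -
  let ?L = "length c"
  define k where "k = (j + ?L - i) mod ?L"
  have L0: "0 < ?L" using i by linarith
  have kL: "k < ?L" unfolding k_def using mod_less_divisor[OF L0] by blast
  have ik: "(i + k) mod ?L = j"
  proof -
    have "(i + k) mod ?L = (i + (j + ?L - i)) mod ?L" unfolding k_def by (simp add: mod_add_right_eq)
    also have "i + (j + ?L - i) = j + ?L" using i by simp
    finally show ?thesis using j by simp
  qed
  have k0: "k \<noteq> 0"
  proof
    assume "k = 0"
    then have "j = i" using ik i by simp
    then show False using ij by simp
  qed
  have jk: "(j + (?L - k)) mod ?L = i"
  proof -
    have "(i + k + (?L - k)) mod ?L = i" using kL i by simp
    then show ?thesis using ik by (metis mod_add_left_eq)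
  qed
  have mL: "?L - k < ?L" using k0 kL by simp
  show ?thesis
  proof (cases "?L + 2 \<le> 2 * Suc k")
    case True
    show ?thesis using fwd_props[OF cyc kL i] True ik by (intro exI[of _ "fwd c i k"]) auto
  next
    case False
    let ?a = "rev (fwd c j (?L - k))"
    have "successively E (fwd c j (?L - k))" using fwd_props[OF cyc mL j] by simp
    then have "successively E ?a" by (auto intro: successively_mono sym)
    moreover have "?L + 2 \<le> 2 * length ?a" using fwd_props[OF cyc mL j] False kL by simp
    ultimately show ?thesis using fwd_props[OF cyc mL j] jk
      by (intro exI[of _ ?a]) (auto simp: hd_rev last_rev)
  qed
qed

lemma succ_V:
  assumes G: "graph V E" and s: "successively E (x # p)"
  shows "set p \<subseteq> V"
  using s
proof (induction p arbitrary: x)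
  case Nil then show ?case by simp
next
  case (Cons y p)
  then have "E x y" "successively E (y # p)" by auto
  then show ?case using Cons.IH G by (auto simp: graph_def)
qed

lemma succ_V':
  assumes G: "graph V E" and s: "successively E p" and "p \<noteq> []" "hd p \<in> V"
  shows "set p \<subseteq> V"
  using assms succ_V[OF G, of "hd p" "tl p"] by (cases p) auto

lemma tl_rev_eq: "tl (rev xs) = rev (butlast xs)"
  by (metis butlast_rev rev_rev_ident)

lemma long_cycle:
  assumes G: "graph V E" and cc: "is_cycle V E c" and cd: "is_cycle V E d"
    and dis: "set c \<inter> set d = {}"
    and P: "abpath E (set c) (set d) P" and Q: "abpath E (set c) (set d) Q"
    and PQ: "set P \<inter> set Q = {}"
  shows "\<exists>\<gamma>. is_cycle V E \<gamma> \<and> length c + length d + 4 \<le> 2 * length \<gamma>"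
proof -
  have sym: "\<And>u v. E u v \<Longrightarrow> E v u" using G by (auto simp: graph_def)
  have PP: "P \<noteq> []" "distinct P" "successively E P" "hd P \<in> set c" "last P \<in> set d"
    "\<forall>x\<in>set (tl P). x \<notin> set c" "\<forall>x\<in>set (butlast P). x \<notin> set d"
    using P by (auto simp: abpath_def)
  have QQ: "Q \<noteq> []" "distinct Q" "successively E Q" "hd Q \<in> set c" "last Q \<in> set d"
    "\<forall>x\<in>set (tl Q). x \<notin> set c" "\<forall>x\<in>set (butlast Q). x \<notin> set d"
    using Q by (auto simp: abpath_def)
  have cV: "set c \<subseteq> V" and dV: "set d \<subseteq> V" using cc cd by (auto simp: is_cycle_def)
  obtain i where i: "i < length c" "c ! i = hd P" using PP(4) by (metis in_set_conv_nth)
  obtain j where j: "j < length c" "c ! j = hd Q" using QQ(4) by (metis in_set_conv_nth)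
  obtain i' where i': "i' < length d" "d ! i' = last P" using PP(5) by (metis in_set_conv_nth)
  obtain j' where j': "j' < length d" "d ! j' = last Q" using QQ(5) by (metis in_set_conv_nth)
  have "hd P \<noteq> hd Q" using PQ hd_in_set PP(1) QQ(1) by (metis disjoint_iff)
  then have ij: "i \<noteq> j" using i j by auto
  have "last P \<noteq> last Q" using PQ last_in_set PP(1) QQ(1) by (metis disjoint_iff)
  then have ij': "j' \<noteq> i'" using i' j' by auto
  obtain \<alpha> where al: "distinct \<alpha>" "set \<alpha> \<subseteq> set c" "successively E \<alpha>" "hd \<alpha> = hd P" "last \<alpha> = hd Q"
    "length c + 2 \<le> 2 * length \<alpha>"
    using arc[OF cc i(1) j(1) ij sym] i j by metis
  obtain \<beta> where be: "distinct \<beta>" "set \<beta> \<subseteq> set d" "successively E \<beta>" "hd \<beta> = last Q" "last \<beta> = last P"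
    "length d + 2 \<le> 2 * length \<beta>"
    using arc[OF cd j'(1) i'(1) ij' sym] i' j' by metis
  have ane: "\<alpha> \<noteq> []" "\<beta> \<noteq> []" using al(6) be(6) by auto
  have "hd P \<noteq> last P" using PP(4,5) dis by (metis IntI empty_iff)
  then have tP: "tl P \<noteq> []" using PP(1) by (cases P) auto
  have "hd Q \<noteq> last Q" using QQ(4,5) dis by (metis IntI empty_iff)
  then have tQ: "tl Q \<noteq> []" using QQ(1) by (cases Q) auto
  have lP: "2 \<le> length P" using tP by (cases P) (auto simp: Suc_le_eq)
  have lQ: "2 \<le> length Q" using tQ by (cases Q) (auto simp: Suc_le_eq)
  have srP: "successively E (rev P)" using PP(3) by (auto intro: successively_mono sym)
  have trP: "tl (rev P) \<noteq> []" using lP by (cases "rev P") auto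
  define X3 where "X3 = \<beta> @ tl (rev P)"
  have s3: "successively E X3" unfolding X3_def
    by (rule join_succ[OF be(3) srP ane(2)]) (simp add: be(5) hd_rev)
  define X2 where "X2 = Q @ tl X3"
  have s2: "successively E X2" unfolding X2_def
    by (rule join_succ[OF QQ(3) s3 QQ(1)]) (simp add: X3_def be(4) ane(2))
  define W where "W = \<alpha> @ tl X2"
  have sW: "successively E W" unfolding W_def
    by (rule join_succ[OF al(3) s2 ane(1)]) (simp add: X2_def al(5) QQ(1))
  have W: "W = \<alpha> @ tl Q @ tl \<beta> @ tl (rev P)"
    unfolding W_def X2_def X3_def using QQ(1) ane(2) by (cases Q; cases \<beta>) auto
  define \<gamma> where "\<gamma> = \<alpha> @ tl Q @ tl \<beta> @ butlast (tl (rev P))"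
  have Wg: "W = \<gamma> @ [hd P]"
  proof -
    have "tl (rev P) = butlast (tl (rev P)) @ [last (tl (rev P))]" using trP by simp
    moreover have "last (tl (rev P)) = hd P" using trP PP(1) by (simp add: last_tl last_rev)
    ultimately show ?thesis unfolding W \<gamma>_def by (metis append.assoc)
  qed
  have gne: "\<gamma> \<noteq> []" using ane(1) \<gamma>_def by simp
  have hg: "hd \<gamma> = hd P" using ane(1) al(4) \<gamma>_def by simp
  have sg: "successively E \<gamma>" using sW Wg by (simp add: successively_append_iff)
  have close: "E (last \<gamma>) (hd \<gamma>)" using sW Wg gne hg by (simp add: successively_append_iff)
  have len: "length \<gamma> = length \<alpha> + (length Q - 1) + (length \<beta> - 1) + (length P - 2)"
    unfolding \<gamma>_def by simp
  have len2: "length c + length d + 4 \<le> 2 * length \<gamma>" using len al(6) be(6) lP lQ by simp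
  have Pi1: "set (butlast (tl (rev P))) \<subseteq> set (butlast P)"
    using in_set_butlastD tl_rev_eq by (metis set_rev subsetI)
  have Pi2: "set (butlast (tl (rev P))) \<subseteq> set (tl P)"
  proof -
    have "butlast (tl (rev P)) = rev (tl (butlast P))" by (simp add: tl_rev_eq butlast_rev)
    then have "set (butlast (tl (rev P))) = set (butlast (tl P))" by (simp add: butlast_tl)
    then show ?thesis by (auto dest: in_set_butlastD)
  qed
  have tQs: "set (tl Q) \<subseteq> insert (last Q) (set (butlast Q))"
    using set_butlast_last[OF QQ(1)] by (auto dest: list.set_sel(2)[OF QQ(1)])
  have hbt: "last Q \<notin> set (tl \<beta>)" using be(1,4) ane(2) by (cases \<beta>) auto
  have dg: "distinct \<gamma>"
  proof -
    have d1: "distinct (tl Q)" "distinct (tl \<beta>)" "distinct (butlast (tl (rev P)))"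
      using QQ(2) be(1) PP(2) by (auto simp: distinct_tl distinct_butlast)
    have x1: "set \<alpha> \<inter> set (tl Q) = {}" using al(2) QQ(6) by blast
    have x2: "set \<alpha> \<inter> set (tl \<beta>) = {}"
    proof -
      have "set (tl \<beta>) \<subseteq> set d" using be(2) by (cases \<beta>) auto
      then show ?thesis using al(2) dis by blast
    qed
    have x3: "set \<alpha> \<inter> set (butlast (tl (rev P))) = {}" using al(2) Pi2 PP(6) by blast
    have x4: "set (tl Q) \<inter> set (tl \<beta>) = {}"
    proof -
      have "set (tl \<beta>) \<subseteq> set d" using be(2) by (cases \<beta>) auto
      then show ?thesis using tQs hbt QQ(7) by blast
    qed
    have x5: "set (tl Q) \<inter> set (butlast (tl (rev P))) = {}"
    proof -
      have "set (tl Q) \<subseteq> set Q" using QQ(1) by (cases Q) auto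
      moreover have "set (butlast (tl (rev P))) \<subseteq> set P" using Pi2 PP(1) by (cases P) auto
      ultimately show ?thesis using PQ by blast
    qed
    have x6: "set (tl \<beta>) \<inter> set (butlast (tl (rev P))) = {}"
    proof -
      have "set (tl \<beta>) \<subseteq> set d" using be(2) by (cases \<beta>) auto
      then show ?thesis using Pi1 PP(7) by blast
    qed
    show ?thesis unfolding \<gamma>_def using al(1) d1 x1 x2 x3 x4 x5 x6 by auto
  qed
  have gV: "set \<gamma> \<subseteq> V"
  proof -
    have "set Q \<subseteq> V" using succ_V'[OF G QQ(3) QQ(1)] QQ(4) cV by blast
    moreover have "set P \<subseteq> V" using succ_V'[OF G PP(3) PP(1)] PP(4) cV by blast
    moreover have "set (tl Q) \<subseteq> set Q" using QQ(1) by (cases Q) auto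
    moreover have "set (butlast (tl (rev P))) \<subseteq> set P" using Pi2 PP(1) by (cases P) auto
    moreover have "set (tl \<beta>) \<subseteq> set d" using be(2) by (cases \<beta>) auto
    ultimately show ?thesis unfolding \<gamma>_def using al(2) cV dV by auto
  qed
  have "3 \<le> length \<gamma>" using len2 cc by (auto simp: is_cycle_def)
  then have "is_cycle V E \<gamma>" unfolding is_cycle_alt using dg gV sg close by blast
  then show ?thesis using len2 by blast
qed

lemma longest_meet:
  assumes G: "graph V E" and tc: "two_connected V E"
    and lc: "longest_cycle V E c" and ld: "longest_cycle V E d"
  shows "set c \<inter> set d \<noteq> {}"
proof
  assume dis: "set c \<inter> set d = {}"
  have cc: "is_cycle V E c" and cd: "is_cycle V E d" using lc ld by (auto simp: longest_cycle_def)
  have cV: "set c \<subseteq> V" and dV: "set d \<subseteq> V" using cc cd by (auto simp: is_cycle_def)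
  have finV: "finite V" using G by (simp add: graph_def)
  have hyp: "\<forall>X. X \<subseteq> V \<longrightarrow> sep E (set c) (set d) X \<longrightarrow> 2 \<le> card X"
  proof (intro allI impI)
    fix X assume XV: "X \<subseteq> V" and sX: "sep E (set c) (set d) X"
    show "2 \<le> card X"
    proof (rule ccontr)
      assume "\<not> 2 \<le> card X"
      then have cX: "card X < 2" by simp
      have conn: "connected_on (V - X) E" using tc XV cX by (simp add: two_connected_def)
      have finX: "finite X" using XV finV finite_subset by blast
      have "\<not> set c \<subseteq> X"
      proof
        assume "set c \<subseteq> X"
        then have "card (set c) \<le> card X" using finX card_mono by blast
        moreover have "card (set c) = length c" using cc by (simp add: is_cycle_def distinct_card)
        moreover have "3 \<le> length c" using cc by (simp add: is_cycle_def)
        ultimately show False using cX by simp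
      qed
      then obtain a where a: "a \<in> set c" "a \<notin> X" by blast
      have "\<not> set d \<subseteq> X"
      proof
        assume "set d \<subseteq> X"
        then have "card (set d) \<le> card X" using finX card_mono by blast
        moreover have "card (set d) = length d" using cd by (simp add: is_cycle_def distinct_card)
        moreover have "3 \<le> length d" using cd by (simp add: is_cycle_def)
        ultimately show False using cX by simp
      qed
      then obtain b where b: "b \<in> set d" "b \<notin> X" by blast
      have "a \<in> V - X" "b \<in> V - X" using a b cV dV by auto
      then have "(RW E (V - X))\<^sup>*\<^sup>* a b" using conn by (simp add: connected_on_RW)
      then have "(RW E (- X))\<^sup>*\<^sup>* a b" by (rule rw_mono) auto
      then show False using sX a b unfolding sep_def by blast
    qed
  qed
  obtain P Q where PQ: "abpath E (set c) (set d) P" "abpath E (set c) (set d) Q" "set P \<inter> set Q = {}"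
    using menger2[OF G cV dV hyp] by blast
  obtain \<gamma> where g: "is_cycle V E \<gamma>" "length c + length d + 4 \<le> 2 * length \<gamma>"
    using long_cycle[OF G cc cd dis PQ] by blast
  have "length \<gamma> \<le> length c" "length \<gamma> \<le> length d" using lc ld g(1) by (auto simp: longest_cycle_def)
  then show False using g(2) by simp
qed

lemma leaf_exists:
  assumes G: "graph I F" and nc: "\<not> (\<exists>c. is_cycle I F c)" and ne: "I \<noteq> {}"
  shows "\<exists>l\<in>I. \<forall>u w. F l u \<longrightarrow> F l w \<longrightarrow> u = w"
proof -
  define P where "P = (\<lambda>p. p \<noteq> [] \<and> distinct p \<and> set p \<subseteq> I \<and> successively F p)"
  obtain v where v: "v \<in> I" using ne by blast
  have Pv: "P [v]" using v by (simp add: P_def)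
  have finI: "finite I" using G by (simp add: graph_def)
  have bnd: "\<forall>p. P p \<longrightarrow> length p < Suc (card I)"
  proof (intro allI impI)
    fix p assume "P p"
    then have "length p = card (set p)" "card (set p) \<le> card I"
      using distinct_card card_mono finI unfolding P_def by (metis, blast)
    then show "length p < Suc (card I)" by simp
  qed
  obtain p where p: "P p" and pmax: "\<forall>q. P q \<longrightarrow> length q \<le> length p"
    using ex_has_greatest_nat[of P "[v]" length "Suc (card I)", OF Pv bnd] by blast
  have pp: "p \<noteq> []" "distinct p" "set p \<subseteq> I" "successively F p" using p by (auto simp: P_def)
  have Fin: "\<And>u w. F u w \<Longrightarrow> u \<in> I \<and> w \<in> I \<and> u \<noteq> w \<and> F w u" using G by (auto simp: graph_def)
  let ?l = "last p"
  have lI: "?l \<in> I" using pp by auto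
  have ext: False if x: "F ?l x" "x \<notin> set p" for x
  proof -
    have "P (p @ [x])" using pp x Fin[OF x(1)] by (auto simp: P_def successively_append_iff)
    then show False using pmax by fastforce
  qed
  show ?thesis
  proof (intro bexI[OF _ lI] allI impI)
    fix u w assume fu: "F ?l u" and fw: "F ?l w"
    show "u = w"
    proof (rule ccontr)
      assume uw: "u \<noteq> w"
      show False
      proof (cases "length p = 1")
        case True
        then have "set p = {?l}" using pp(1) by (cases p) auto
        then have "u \<notin> set p" using Fin[OF fu] by auto
        then show False using ext fu by blast
      next
        case False
        then have lp: "2 \<le> length p" using pp(1) by (cases p) (auto simp: Suc_le_eq)
        define n where "n = length p"
        define z where "z = p ! (n - 2)"
        have lnth: "?l = p ! (n - 1)" unfolding n_def using pp(1) by (simp add: last_conv_nth)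
        obtain x where x: "F ?l x" "x \<noteq> z" using fu fw uw by metis
        show False
        proof (cases "x \<in> set p")
          case False then show False using ext x by blast
        next
          case True
          then obtain k where k: "k < n" "p ! k = x" unfolding n_def by (metis in_set_conv_nth)
          have "x \<noteq> ?l" using Fin[OF x(1)] by auto
          then have "k \<noteq> n - 1" using k lnth by auto
          moreover have "k \<noteq> n - 2" using k x(2) z_def by auto
          ultimately have kn: "k + 3 \<le> n" using k lp n_def by linarith
          define c where "c = drop k p"
          have "3 \<le> length c" using kn c_def n_def by simp
          moreover have "distinct c" using pp(2) c_def by simp
          moreover have "set c \<subseteq> I" using pp(3) c_def by (meson set_drop_subset subset_trans)
          moreover have "successively F c" using pp(4) c_def
            by (metis append_take_drop_id successively_append_iff)
          moreover have "last c = ?l" using c_def kn n_def by simp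
          moreover have "hd c = x" using c_def k n_def by (simp add: hd_drop_conv_nth)
          moreover have "F ?l x" by (fact x(1))
          ultimately have "is_cycle I F c" unfolding is_cycle_alt by simp
          then show False using nc by blast
        qed
      qed
    qed
  qed
qed

lemma conn_remove_leaf:
  assumes conn: "connected_on T F" and leaf: "\<forall>u w. F l u \<longrightarrow> F l w \<longrightarrow> u = w"
    and sym: "\<And>u v. F u v \<Longrightarrow> F v u" and irr: "\<And>u. \<not> F u u"
  shows "connected_on (T - {l}) F"
proof -
  let ?R = "RW F T" and ?R' = "RW F (T - {l})"
  have claim: "(z \<noteq> l \<longrightarrow> ?R'\<^sup>*\<^sup>* x z) \<and> (z = l \<longrightarrow> (\<exists>q. F l q \<and> ?R'\<^sup>*\<^sup>* x q))"
    if r: "?R\<^sup>*\<^sup>* x z" and x: "x \<in> T - {l}" for x z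
    using r
  proof (induction rule: rtranclp_induct)
    case base
    then show ?case using x by auto
  next
    case (step z z')
    have st: "F z z'" "z \<in> T" "z' \<in> T" using step(2) by (auto simp: RW_def)
    show ?case
    proof (cases "z' = l")
      case True
      then have "z \<noteq> l" using irr st(1) by blast
      then have "?R'\<^sup>*\<^sup>* x z" using step(3) by blast
      moreover have "F l z" using sym st(1) True by blast
      ultimately show ?thesis using True by blast
    next
      case False
      show ?thesis
      proof (cases "z = l")
        case True
        then obtain q where q: "F l q" "?R'\<^sup>*\<^sup>* x q" using step(3) by blast
        have "q = z'" using leaf q(1) st(1) True by blast
        then show ?thesis using q(2) False by blast
      next
        case zl: False
        then have "?R'\<^sup>*\<^sup>* x z" using step(3) by blast
        moreover have "?R' z z'" using st zl False by (simp add: RW_def)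
        ultimately show ?thesis using False by (meson rtranclp.rtrancl_into_rtrancl)
      qed
    qed
  qed
  show ?thesis unfolding connected_on_RW
  proof (intro ballI)
    fix x y assume "x \<in> T - {l}" "y \<in> T - {l}"
    moreover then have "?R\<^sup>*\<^sup>* x y" using conn by (simp add: connected_on_RW)
    ultimately show "?R'\<^sup>*\<^sup>* x y" using claim by blast
  qed
qed

lemma connected_on_restrict:
  assumes "W \<subseteq> I'"
  shows "connected_on W (RW F I') \<longleftrightarrow> connected_on W F"
proof -
  have "RW (RW F I') W = RW F W" using assms by (auto simp: RW_def fun_eq_iff)
  then show ?thesis by (simp add: connected_on_RW)
qed

lemma helly_aux:
  assumes "card I = n" "graph I F" "\<not> (\<exists>c. is_cycle I F c)" "I \<noteq> {}"
    "\<forall>T\<in>\<T>. T \<noteq> {} \<and> T \<subseteq> I \<and> connected_on T F"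
    "\<forall>T1\<in>\<T>. \<forall>T2\<in>\<T>. T1 \<inter> T2 \<noteq> {}"
  shows "\<exists>t\<in>I. \<forall>T\<in>\<T>. t \<in> T"
  using assms
proof (induction n arbitrary: I F \<T> rule: less_induct)
  case (less n)
  note G = less.prems(2) and nc = less.prems(3) and ne = less.prems(4) and TT = less.prems(5)
    and PI = less.prems(6)
  have Fin: "\<And>u w. F u w \<Longrightarrow> u \<in> I \<and> w \<in> I \<and> u \<noteq> w \<and> F w u" using G by (auto simp: graph_def)
  have finI: "finite I" using G by (simp add: graph_def)
  obtain l where lI: "l \<in> I" and leaf: "\<forall>u w. F l u \<longrightarrow> F l w \<longrightarrow> u = w"
    using leaf_exists[OF G nc ne] by blast
  show ?case
  proof (cases "\<exists>T0\<in>\<T>. T0 = {l}")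
    case True
    then obtain T0 where "T0 \<in> \<T>" "T0 = {l}" by blast
    then have "\<forall>T\<in>\<T>. l \<in> T" using PI by blast
    then show ?thesis using lI by blast
  next
    case False
    show ?thesis
    proof (cases "I = {l}")
      case True
      then have "\<forall>T\<in>\<T>. l \<in> T" using TT by blast
      then show ?thesis using lI by blast
    next
      case IL: False
      define I' where "I' = I - {l}"
      define F' where "F' = RW F I'"
      define \<T>' where "\<T>' = (\<lambda>T. T - {l}) ` \<T>"
      have G': "graph I' F'" using G unfolding graph_def F'_def RW_def I'_def by auto
      have nc': "\<not> (\<exists>c. is_cycle I' F' c)"
      proof
        assume "\<exists>c. is_cycle I' F' c"
        then obtain c where "is_cycle I' F' c" by blast
        then have "is_cycle I F c" unfolding is_cycle_def F'_def RW_def I'_def by auto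
        then show False using nc by blast
      qed
      have ne': "I' \<noteq> {}" using IL lI ne I'_def by blast
      have "0 < card I" using lI finI card_gt_0_iff by blast
      then have cardl: "card I' < n" using I'_def less.prems(1) lI finI by simp
      have irr: "\<And>u. \<not> F u u" using Fin by blast
      have sym: "\<And>u v. F u v \<Longrightarrow> F v u" using Fin by blast
      have TT': "\<forall>T\<in>\<T>'. T \<noteq> {} \<and> T \<subseteq> I' \<and> connected_on T F'"
      proof
        fix T' assume "T' \<in> \<T>'"
        then obtain T where T: "T \<in> \<T>" "T' = T - {l}" unfolding \<T>'_def by blast
        have "T \<noteq> {l}" "T \<noteq> {}" using False T(1) TT by auto
        then have "T' \<noteq> {}" using T(2) by blast
        moreover have "T' \<subseteq> I'" using T TT I'_def by blast
        moreover have "connected_on T' F"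
          using conn_remove_leaf[OF _ leaf sym irr] T TT by blast
        then have "connected_on T' F'" unfolding F'_def using connected_on_restrict[OF calculation(2)] by blast
        ultimately show "T' \<noteq> {} \<and> T' \<subseteq> I' \<and> connected_on T' F'" by blast
      qed
      have nbr: "\<exists>q. F l q \<and> q \<in> T" if T: "T \<in> \<T>" "l \<in> T" for T
      proof -
        have "T \<noteq> {l}" using False T(1) by auto
        then obtain x where x: "x \<in> T" "x \<noteq> l" using T(2) by blast
        have "(RW F T)\<^sup>*\<^sup>* l x" using TT T x(1) by (simp add: connected_on_RW)
        then show ?thesis using x(2)
        proof (cases rule: converse_rtranclpE)
          case (step q)
          then show ?thesis by (auto simp: RW_def)
        qed simp
      qed
      have PI': "\<forall>T1\<in>\<T>'. \<forall>T2\<in>\<T>'. T1 \<inter> T2 \<noteq> {}"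
      proof (intro ballI)
        fix T1' T2' assume "T1' \<in> \<T>'" "T2' \<in> \<T>'"
        then obtain T1 T2 where T: "T1 \<in> \<T>" "T2 \<in> \<T>" "T1' = T1 - {l}" "T2' = T2 - {l}"
          unfolding \<T>'_def by blast
        show "T1' \<inter> T2' \<noteq> {}"
        proof
          assume e: "T1' \<inter> T2' = {}"
          moreover have "T1 \<inter> T2 \<noteq> {}" using PI T(1,2) by blast
          ultimately have "l \<in> T1" "l \<in> T2" using T(3,4) by blast+
          then obtain q1 q2 where "F l q1" "q1 \<in> T1" "F l q2" "q2 \<in> T2" using nbr T(1,2) by blast
          moreover then have "q1 = q2" "q1 \<noteq> l" using leaf irr by blast+
          ultimately show False using e T(3,4) by blast
        qed
      qed
      obtain t where t: "t \<in> I'" "\<forall>T\<in>\<T>'. t \<in> T"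
        using less.IH[OF cardl refl G' nc' ne' TT' PI'] by blast
      then have "\<forall>T\<in>\<T>. t \<in> T" unfolding \<T>'_def by blast
      then show ?thesis using t(1) I'_def by blast
    qed
  qed
qed

lemma helly:
  assumes "graph I F" "\<not> (\<exists>c. is_cycle I F c)" "I \<noteq> {}"
    "\<forall>T\<in>\<T>. T \<noteq> {} \<and> T \<subseteq> I \<and> connected_on T F"
    "\<forall>T1\<in>\<T>. \<forall>T2\<in>\<T>. T1 \<inter> T2 \<noteq> {}"
  shows "\<exists>t\<in>I. \<forall>T\<in>\<T>. t \<in> T"
  using helly_aux[OF refl assms] .

lemma td_bag_sub:
  assumes "tree_decomposition V E I F B" "t \<in> I"
  shows "B t \<subseteq> V"
  using assms unfolding tree_decomposition_def by blast

lemma sub_conn: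
  assumes td: "tree_decomposition V E I F B" and CV: "C \<subseteq> V" and conn: "connected_on C E"
  shows "connected_on {t\<in>I. B t \<inter> C \<noteq> {}} F"
proof -
  define TC where "TC = {t\<in>I. B t \<inter> C \<noteq> {}}"
  let ?R = "RW F TC"
  have edge: "\<And>u v. E u v \<Longrightarrow> \<exists>t\<in>I. u \<in> B t \<and> v \<in> B t"
    and tv: "\<And>v. v \<in> V \<Longrightarrow> connected_on {t \<in> I. v \<in> B t} F"
    using td unfolding tree_decomposition_def by blast+
  have lift: "?R\<^sup>*\<^sup>* t t'" if "v \<in> C" "t \<in> I" "v \<in> B t" "t' \<in> I" "v \<in> B t'" for v t t'
  proof -
    have "(RW F {t \<in> I. v \<in> B t})\<^sup>*\<^sup>* t t'" using tv[of v] that CV by (auto simp: connected_on_RW)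
    then show ?thesis by (rule rw_mono) (use that in \<open>auto simp: TC_def\<close>)
  qed
  have main: "\<forall>t\<in>I. v \<in> B t \<longrightarrow> ?R\<^sup>*\<^sup>* t1 t"
    if r: "(RW E C)\<^sup>*\<^sup>* v1 v" and v1: "v1 \<in> C" "t1 \<in> I" "v1 \<in> B t1" for v1 v t1
    using r
  proof (induction rule: rtranclp_induct)
    case base
    then show ?case using lift v1 by blast
  next
    case (step v w)
    have vw: "E v w" "v \<in> C" "w \<in> C" using step(2) by (auto simp: RW_def)
    obtain t' where t': "t' \<in> I" "v \<in> B t'" "w \<in> B t'" using edge[OF vw(1)] by blast
    have "?R\<^sup>*\<^sup>* t1 t'" using step(3) t' by blast
    then show ?case using lift[OF vw(3) t'(1) t'(3)] by (meson rtranclp_trans)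
  qed
  show ?thesis unfolding connected_on_RW TC_def[symmetric]
  proof (intro ballI)
    fix t1 t2 assume t: "t1 \<in> TC" "t2 \<in> TC"
    then obtain v1 v2 where v: "v1 \<in> B t1" "v1 \<in> C" "v2 \<in> B t2" "v2 \<in> C" unfolding TC_def by blast
    have "(RW E C)\<^sup>*\<^sup>* v1 v2" using conn v by (simp add: connected_on_RW)
    then show "?R\<^sup>*\<^sup>* t1 t2" using main v t unfolding TC_def by blast
  qed
qed

lemma td_meets:
  assumes td: "tree_decomposition V E I F B"
    and CC: "\<forall>C\<in>\<C>. C \<noteq> {} \<and> C \<subseteq> V \<and> connected_on C E"
    and PI: "\<forall>C1\<in>\<C>. \<forall>C2\<in>\<C>. C1 \<inter> C2 \<noteq> {}"
  shows "\<exists>t\<in>I. \<forall>C\<in>\<C>. B t \<inter> C \<noteq> {}"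
proof -
  have tree: "graph I F" "\<not> (\<exists>c. is_cycle I F c)" "I \<noteq> {}" and U: "(\<Union>t\<in>I. B t) = V"
    using td unfolding tree_decomposition_def is_tree_def by blast+
  define \<T> where "\<T> = (\<lambda>C. {t\<in>I. B t \<inter> C \<noteq> {}}) ` \<C>"
  have h1: "\<forall>T\<in>\<T>. T \<noteq> {} \<and> T \<subseteq> I \<and> connected_on T F"
  proof
    fix T assume "T \<in> \<T>"
    then obtain C where C: "C \<in> \<C>" "T = {t\<in>I. B t \<inter> C \<noteq> {}}" unfolding \<T>_def by blast
    have "T \<noteq> {}" using C CC U by blast
    moreover have "connected_on T F" using sub_conn[OF td] C CC by blast
    ultimately show "T \<noteq> {} \<and> T \<subseteq> I \<and> connected_on T F" using C by blast
  qed
  have h2: "\<forall>T1\<in>\<T>. \<forall>T2\<in>\<T>. T1 \<inter> T2 \<noteq> {}"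
  proof (intro ballI)
    fix T1 T2 assume "T1 \<in> \<T>" "T2 \<in> \<T>"
    then obtain C1 C2 where C: "C1 \<in> \<C>" "C2 \<in> \<C>" "T1 = {t\<in>I. B t \<inter> C1 \<noteq> {}}"
      "T2 = {t\<in>I. B t \<inter> C2 \<noteq> {}}" unfolding \<T>_def by blast
    obtain v where v: "v \<in> C1" "v \<in> C2" using PI C(1,2) by blast
    then have "v \<in> V" using CC C(1) by blast
    then obtain t where "t \<in> I" "v \<in> B t" using U by blast
    then show "T1 \<inter> T2 \<noteq> {}" using C(3,4) v by blast
  qed
  obtain t where t: "t \<in> I" "\<forall>T\<in>\<T>. t \<in> T" using helly[OF tree h1 h2] by blast
  have "\<forall>C\<in>\<C>. B t \<inter> C \<noteq> {}"
  proof
    fix C assume "C \<in> \<C>"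
    then have "{t\<in>I. B t \<inter> C \<noteq> {}} \<in> \<T>" unfolding \<T>_def by blast
    then have "t \<in> {t\<in>I. B t \<inter> C \<noteq> {}}" by (rule bspec[OF t(2)])
    then show "B t \<inter> C \<noteq> {}" by simp
  qed
  then show ?thesis using t(1) by blast
qed

lemma cycle_connected:
  assumes G: "graph V E" and c: "is_cycle V E c"
  shows "connected_on (set c) E"
proof -
  have sym: "\<And>u v. E u v \<Longrightarrow> E v u" using G by (auto simp: graph_def)
  have cc: "c \<noteq> []" "successively E c" using c by (auto simp: is_cycle_alt)
  have s: "successively (RW E (set c)) c" using cc(2) by (rule successively_RW) simp
  have h: "(RW E (set c))\<^sup>*\<^sup>* (hd c) x" if "x \<in> set c" for x
    using path_reach[OF s cc(1) that] .
  show ?thesis unfolding connected_on_RW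
  proof (intro ballI)
    fix u v assume "u \<in> set c" "v \<in> set c"
    then have "(RW E (set c))\<^sup>*\<^sup>* u (hd c)" "(RW E (set c))\<^sup>*\<^sup>* (hd c) v"
      using h rw_sym[of E, OF sym] by blast+
    then show "(RW E (set c))\<^sup>*\<^sup>* u v" by (rule rtranclp_trans)
  qed
qed

lemma lct_le:
  assumes "S \<subseteq> V" "\<forall>c. longest_cycle V E c \<longrightarrow> set c \<inter> S \<noteq> {}"
  shows "lct V E \<le> card S"
  unfolding lct_def by (rule Least_le) (use assms in blast)

lemma lct_bag:
  assumes G: "graph V E" and tc: "two_connected V E" and td: "tree_decomposition V E I F B"
  shows "\<exists>t\<in>I. lct V E \<le> card (B t)"
proof -
  define \<C> where "\<C> = set ` {c. longest_cycle V E c}"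
  have CC: "\<forall>C\<in>\<C>. C \<noteq> {} \<and> C \<subseteq> V \<and> connected_on C E"
  proof
    fix C assume "C \<in> \<C>"
    then obtain c where c: "longest_cycle V E c" "C = set c" unfolding \<C>_def by blast
    then have ic: "is_cycle V E c" by (simp add: longest_cycle_def)
    then have "C \<noteq> {}" "C \<subseteq> V" using c(2) by (auto simp: is_cycle_def)
    moreover have "connected_on C E" using cycle_connected[OF G ic] c(2) by simp
    ultimately show "C \<noteq> {} \<and> C \<subseteq> V \<and> connected_on C E" by blast
  qed
  have PI: "\<forall>C1\<in>\<C>. \<forall>C2\<in>\<C>. C1 \<inter> C2 \<noteq> {}"
    unfolding \<C>_def using longest_meet[OF G tc] by blast
  obtain t where t: "t \<in> I" "\<forall>C\<in>\<C>. B t \<inter> C \<noteq> {}" using td_meets[OF td CC PI] by blast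
  have "\<forall>c. longest_cycle V E c \<longrightarrow> set c \<inter> B t \<noteq> {}"
    using t(2) unfolding \<C>_def by blast
  then have "lct V E \<le> card (B t)" using lct_le td_bag_sub[OF td t(1)] by blast
  then show ?thesis using t(1) by blast
qed

lemma trivial_td:
  assumes G: "graph V E"
  shows "tree_decomposition V E {0::nat} (\<lambda>_ _. False) (\<lambda>_. V)"
proof -
  have nc: "\<not> (\<exists>c. is_cycle {0::nat} (\<lambda>_ _. False) c)"
    by (auto simp: is_cycle_alt successively_Cons)
  show ?thesis unfolding tree_decomposition_def is_tree_def
    using nc G by (auto simp: graph_def connected_on_def)
qed

lemma treewidth_witness:
  assumes G: "graph V E"
  obtains I :: "nat set" and F B where "tree_decomposition V E I F B"
    "treewidth V E = Max ((\<lambda>t. card (B t)) ` I) - 1"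
proof -
  let ?P = "\<lambda>k. \<exists>(I :: nat set) F B. tree_decomposition V E I F B \<and> k = Max ((\<lambda>t. card (B t)) ` I) - 1"
  have "?P (Max ((\<lambda>t. card ((\<lambda>_. V) t)) ` {0::nat}) - 1)" using trivial_td[OF G] by blast
  then have "?P (LEAST k. ?P k)" by (rule LeastI)
  then show ?thesis using that unfolding treewidth_def by blast
qed

lemma tw_bound:
  assumes G: "graph V E" and tc: "two_connected V E"
  shows "lct V E \<le> treewidth V E + 1"
proof -
  obtain I :: "nat set" and F B where td: "tree_decomposition V E I F B"
    and tw: "treewidth V E = Max ((\<lambda>t. card (B t)) ` I) - 1"
    using treewidth_witness[OF G] by blast
  obtain t where t: "t \<in> I" "lct V E \<le> card (B t)" using lct_bag[OF G tc td] by blast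
  have "finite I" using td by (simp add: tree_decomposition_def is_tree_def graph_def)
  then have "card (B t) \<le> Max ((\<lambda>t. card (B t)) ` I)" using t(1) by simp
  then show ?thesis using t(2) tw by linarith
qed

definition chordless :: "('a \<Rightarrow> 'a \<Rightarrow> bool) \<Rightarrow> 'a list \<Rightarrow> bool" where
  "chordless E p \<longleftrightarrow> (\<forall>i j. i < length p \<longrightarrow> j < length p \<longrightarrow> E (p!i) (p!j) \<longrightarrow> j = Suc i \<or> i = Suc j)"

definition thru :: "('a \<Rightarrow> 'a \<Rightarrow> bool) \<Rightarrow> 'a set \<Rightarrow> 'a \<Rightarrow> 'a \<Rightarrow> 'a list \<Rightarrow> bool" where
  "thru E C x y p \<longleftrightarrow> 3 \<le> length p \<and> hd p = x \<and> last p = y \<and> distinct p \<and>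
     set p \<subseteq> insert x (insert y C) \<and> successively E p"

lemma shortcut:
  assumes nxy: "\<not> E x y" and tp: "thru E C x y p" and min: "\<forall>p'. thru E C x y p' \<longrightarrow> length p \<le> length p'"
    and ij: "i < j" "j < length p" and e: "E (p!i) (p!j)"
  shows "j = Suc i"
proof (rule ccontr)
  assume nj: "j \<noteq> Suc i"
  then have j2: "Suc (Suc i) \<le> j" using ij by simp
  have T: "3 \<le> length p" "hd p = x" "last p = y" "distinct p" "set p \<subseteq> insert x (insert y C)"
    "successively E p" using tp by (auto simp: thru_def)
  have pne: "p \<noteq> []" using T(1) by auto
  show False
  proof (cases "i = 0 \<and> j = length p - 1")
    case True
    then have "p!i = x" "p!j = y" using T(2,3) pne by (auto simp: hd_conv_nth last_conv_nth)
    then show False using e nxy by simp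
  next
    case False
    define p' where "p' = take (Suc i) p @ drop j p"
    have lp': "length p' = Suc i + (length p - j)" unfolding p'_def using ij by simp
    have "3 \<le> length p'" using False lp' ij j2 by auto
    moreover have "hd p' = x" unfolding p'_def using T(2) pne by (cases p) auto
    moreover have "last p' = y" unfolding p'_def using T(3) ij by simp
    moreover have "distinct p'"
    proof -
      have "set (take (Suc i) p) \<inter> set (drop j p) = {}"
        using set_take_disj_set_drop_if_distinct[OF T(4)] ij by simp
      then show ?thesis unfolding p'_def using T(4) by (simp only: distinct_append distinct_take distinct_drop)
    qed
    moreover have "set p' \<subseteq> insert x (insert y C)"
    proof -
      have "set p' \<subseteq> set p" unfolding p'_def using set_take_subset set_drop_subset by (metis Un_subset_iff set_append)
      then show ?thesis using T(5) by blast
    qed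
    moreover have "successively E p'"
    proof -
      have "successively E (take (Suc i) p @ drop (Suc i) p)" using T(6) by simp
      then have s1: "successively E (take (Suc i) p)" by (simp only: successively_append_iff)
      have "successively E (take j p @ drop j p)" using T(6) by simp
      then have s2: "successively E (drop j p)" by (simp only: successively_append_iff)
      have "last (take (Suc i) p) = p ! i" using ij by (simp add: take_Suc_conv_app_nth)
      moreover have "hd (drop j p) = p ! j" using ij by (simp add: hd_drop_conv_nth)
      ultimately show ?thesis unfolding p'_def using s1 s2 e by (simp add: successively_append_iff)
    qed
    ultimately have "thru E C x y p'" by (simp add: thru_def)
    moreover have "length p' < length p" using lp' j2 ij by simp
    ultimately show False using min by fastforce
  qed
qed

lemma shortest_chordless:
  assumes sym: "\<And>u v. E u v \<Longrightarrow> E v u" and irr: "\<And>u. \<not> E u u"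
    and nxy: "\<not> E x y" and tp: "thru E C x y p" and min: "\<forall>p'. thru E C x y p' \<longrightarrow> length p \<le> length p'"
  shows "chordless E p"
  unfolding chordless_def
proof (intro allI impI)
  fix i j assume i: "i < length p" and j: "j < length p" and e: "E (p!i) (p!j)"
  consider "i < j" | "i = j" | "j < i" by linarith
  then show "j = Suc i \<or> i = Suc j"
  proof cases
    case 1 then show ?thesis using shortcut[OF nxy tp min 1 j e] by simp
  next
    case 2 then show ?thesis using e irr by simp
  next
    case 3 then show ?thesis using shortcut[OF nxy tp min 3 i sym[OF e]] by simp
  qed
qed

lemma thru_mid:
  assumes "thru E C x y p" "0 < k" "k < length p - 1"
  shows "p ! k \<in> C"
proof -
  have T: "3 \<le> length p" "hd p = x" "last p = y" "distinct p" "set p \<subseteq> insert x (insert y C)"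
    using assms(1) by (auto simp: thru_def)
  have pne: "p \<noteq> []" using T(1) by auto
  have k1: "k < length p" "0 < length p" "length p - 1 < length p" using assms(3) by auto
  have "p ! k \<noteq> p ! 0" using nth_eq_iff_index_eq[OF T(4) k1(1) k1(2)] assms(2) by simp
  moreover have "p ! k \<noteq> p ! (length p - 1)" using nth_eq_iff_index_eq[OF T(4) k1(1) k1(3)] assms(3) by simp
  moreover have "p ! 0 = x" "p ! (length p - 1) = y" using T(2,3) pne by (auto simp: hd_conv_nth last_conv_nth)
  moreover have "p ! k \<in> set p" using assms(3) by simp
  ultimately show ?thesis using T(5) by auto
qed

lemma glue_induced:
  assumes G: "graph V E"
    and tp: "thru E Ca x y p" and tr: "thru E Cb x y r"
    and cp: "chordless E p" and cr: "chordless E r"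
    and dis: "Ca \<inter> Cb = {}" and xy: "x \<notin> Ca" "x \<notin> Cb" "y \<notin> Ca" "y \<notin> Cb"
    and noE: "\<forall>u\<in>Ca. \<forall>w\<in>Cb. \<not> E u w"
    and pV: "set p \<subseteq> V" and rV: "set r \<subseteq> V"
  shows "induced_cycle V E (p @ butlast (tl (rev r))) \<and> 4 \<le> length (p @ butlast (tl (rev r)))"
proof -
  have sym: "\<And>u v. E u v \<Longrightarrow> E v u" and irr: "\<And>u. \<not> E u u" using G by (auto simp: graph_def)
  have P: "3 \<le> length p" "hd p = x" "last p = y" "distinct p" "set p \<subseteq> insert x (insert y Ca)"
    "successively E p" using tp by (auto simp: thru_def)
  have R: "3 \<le> length r" "hd r = x" "last r = y" "distinct r" "set r \<subseteq> insert x (insert y Cb)"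
    "successively E r" using tr by (auto simp: thru_def)
  define m where "m = length p"
  define n where "n = length r"
  define mid where "mid = butlast (tl (rev r))"
  define c where "c = p @ mid"
  define L where "L = m + (n - 2)"
  have pne: "p \<noteq> []" and rne: "r \<noteq> []" using P(1) R(1) by auto
  have lmid: "length mid = n - 2" unfolding mid_def n_def by simp
  have lc: "length c = L" unfolding c_def L_def m_def using lmid by simp
  have L4: "4 \<le> L" using P(1) R(1) unfolding L_def m_def n_def by simp
  have midnth: "mid ! t = r ! (n - 2 - t)" if "t < n - 2" for t
  proof -
    have "mid ! t = tl (rev r) ! t" unfolding mid_def using that by (simp add: nth_butlast n_def)
    also have "\<dots> = rev r ! Suc t" using that by (simp add: nth_tl n_def)
    also have "\<dots> = r ! (n - 1 - Suc t)" using that by (simp add: rev_nth n_def)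
    finally show ?thesis by simp
  qed
  have c1: "c ! k = p ! k" if "k < m" for k unfolding c_def using that by (simp add: nth_append m_def)
  have c2: "c ! k = r ! (L - k)" if "m \<le> k" "k < L" for k
  proof -
    have "c ! k = mid ! (k - m)" unfolding c_def using that by (simp add: nth_append m_def)
    also have "\<dots> = r ! (n - 2 - (k - m))" using that midnth L_def by simp
    also have "n - 2 - (k - m) = L - k" using that L_def by simp
    finally show ?thesis .
  qed
  have p0: "p ! 0 = x" "p ! (m - 1) = y" using P(2,3) pne by (auto simp: hd_conv_nth last_conv_nth m_def)
  have r0: "r ! 0 = x" "r ! (n - 1) = y" using R(2,3) rne by (auto simp: hd_conv_nth last_conv_nth n_def)
  have xney: "x \<noteq> y"
  proof -
    have i: "0 < length p" "length p - 1 < length p" using P(1) by auto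
    have "p ! 0 \<noteq> p ! (m - 1)" using nth_eq_iff_index_eq[OF P(4) i] P(1) m_def by simp
    then show ?thesis using p0 by simp
  qed
  have midCb: "set mid \<subseteq> Cb"
  proof
    fix z assume "z \<in> set mid"
    then obtain t where t: "t < n - 2" "mid ! t = z" using lmid by (metis in_set_conv_nth)
    then have "z = r ! (n - 2 - t)" using midnth by simp
    moreover have "0 < n - 2 - t" "n - 2 - t < length r - 1" using t(1) n_def by auto
    ultimately show "z \<in> Cb" using thru_mid[OF tr] by simp
  qed
  have midr: "set mid \<subseteq> set r"
  proof -
    have "set mid \<subseteq> set (tl (rev r))" unfolding mid_def by (auto dest: in_set_butlastD)
    moreover have "set (tl (rev r)) \<subseteq> set (rev r)" by (cases "rev r") auto
    ultimately show ?thesis by simp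
  qed
  have dmid: "distinct mid" unfolding mid_def using R(4) by (simp add: distinct_butlast distinct_tl)
  have dc: "distinct c" unfolding c_def using P(4,5) dmid midCb dis xy by auto
  have cV: "set c \<subseteq> V" unfolding c_def using pV rV midr by auto
  have trr: "tl (rev r) \<noteq> []" using R(1) by (cases "rev r") auto
  have Wc: "p @ tl (rev r) = c @ [x]"
  proof -
    have "tl (rev r) = butlast (tl (rev r)) @ [last (tl (rev r))]" using trr by simp
    moreover have "last (tl (rev r)) = x" using trr R(2) rne by (simp add: last_tl last_rev)
    ultimately show ?thesis unfolding c_def mid_def by (metis append.assoc)
  qed
  have srr: "successively E (rev r)" using R(6) by (auto intro: successively_mono sym)
  have sW: "successively E (p @ tl (rev r))"
    by (rule join_succ[OF P(6) srr pne]) (simp add: P(3) R(3) hd_rev)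
  have cne: "c \<noteq> []" using pne c_def by simp
  have sc: "successively E c" and cl: "E (last c) x"
    using sW Wc cne by (auto simp: successively_append_iff)
  have hc: "hd c = x" using P(2) pne c_def by simp
  have cyc: "is_cycle V E c" unfolding is_cycle_alt using L4 lc dc cV sc cl hc by simp
  have K: "(i = 0 \<and> j = L - 1) \<or> j = Suc i"
    if ij: "i < m" "m \<le> j" "j < L" and e: "E (c!i) (c!j)" for i j
  proof -
    define t where "t = L - j"
    have t: "0 < t" "t < n - 1" "t < n" using ij t_def L_def by auto
    have cj: "c ! j = r ! t" using c2[OF ij(2,3)] t_def by simp
    have rt: "r ! t \<in> Cb" using thru_mid[OF tr t(1)] t(2) n_def by simp
    have ci: "c ! i = p ! i" using c1 ij(1) by simp
    consider "i = 0" | "i = m - 1" | "0 < i \<and> i < m - 1" using ij(1) by linarith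
    then show ?thesis
    proof cases
      case 1
      then have "E (r ! 0) (r ! t)" using e ci cj p0 r0 by simp
      moreover have "0 < length r" using R(1) by linarith
      ultimately have "t = Suc 0 \<or> 0 = Suc t" using cr t(3) n_def unfolding chordless_def by blast
      then have "t = Suc 0" by simp
      then have "j = L - 1" using t_def ij by linarith
      then show ?thesis using 1 by simp
    next
      case 2
      then have "E (r ! (n - 1)) (r ! t)" using e ci cj p0 r0 by simp
      moreover have "n - 1 < length r" using R(1) n_def by simp
      ultimately have "t = Suc (n - 1) \<or> n - 1 = Suc t" using cr t(3) n_def unfolding chordless_def by blast
      then have "n - 1 = Suc t" using t(2) n_def by linarith
      then have "j = Suc i" using 2 t_def ij L_def by linarith
      then show ?thesis by simp
    next
      case 3
      then have "p ! i \<in> Ca" using thru_mid[OF tp] m_def by simp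
      then show ?thesis using noE rt e ci cj by auto
    qed
  qed
  have ind: "j = (i + 1) mod L \<or> i = (j + 1) mod L"
    if ij: "i < L" "j < L" and e: "E (c!i) (c!j)" for i j
  proof -
    have "(i = 0 \<and> j = L - 1) \<or> (j = 0 \<and> i = L - 1) \<or> j = Suc i \<or> i = Suc j"
    proof (cases "i < m")
      case True
      show ?thesis
      proof (cases "j < m")
        case True
        then have "E (p!i) (p!j)" using e c1 \<open>i < m\<close> by simp
        then show ?thesis using cp \<open>i < m\<close> True unfolding chordless_def m_def by blast
      next
        case False
        then have "m \<le> j" by simp
        then show ?thesis using K[OF \<open>i < m\<close> _ ij(2) e] by blast
      qed
    next
      case False
      show ?thesis
      proof (cases "j < m")
        case True
        moreover have "m \<le> i" using False by simp
        ultimately have "(j = 0 \<and> i = L - 1) \<or> i = Suc j" using K[OF True _ ij(1) sym[OF e]] by blast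
        then show ?thesis by blast
      next
        case jm: False
        then have "E (r ! (L - i)) (r ! (L - j))" using e c2 False ij by simp
        moreover have "L - i < length r" "L - j < length r" using False jm ij L_def n_def R(1) by auto
        ultimately have "L - j = Suc (L - i) \<or> L - i = Suc (L - j)" using cr unfolding chordless_def by blast
        then show ?thesis using ij by auto
      qed
    qed
    then show ?thesis using ij L4 by auto
  qed
  have "induced_cycle V E c" unfolding induced_cycle_def using cyc ind lc by simp
  then show ?thesis using L4 lc c_def mid_def by simp
qed

definition compo :: "'a set \<Rightarrow> ('a \<Rightarrow> 'a \<Rightarrow> bool) \<Rightarrow> 'a set \<Rightarrow> 'a \<Rightarrow> 'a set" where
  "compo V E S a = {v. (RW E (V - S))\<^sup>*\<^sup>* a v}"

lemma comp_closed:
  assumes "v \<in> compo V E S a" "w \<in> V - S" "E v w" "a \<in> V - S"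
  shows "w \<in> compo V E S a"
proof -
  have "v = a \<or> v \<in> V - S" using assms(1) rw_reach_cases unfolding compo_def by fastforce
  then have "v \<in> V - S" using assms(4) by blast
  then have "RW E (V - S) v w" using assms(2,3) by (simp add: RW_def)
  then show ?thesis using assms(1) unfolding compo_def by (simp add: rtranclp.rtrancl_into_rtrancl)
qed

lemma comp_sub:
  assumes "a \<in> V - S"
  shows "compo V E S a \<subseteq> V - S"
  using assms rw_reach_cases unfolding compo_def by fastforce

lemma comp_conn:
  assumes "(RW E (V - S))\<^sup>*\<^sup>* a v" "a \<in> V - S"
  shows "(RW E (compo V E S a))\<^sup>*\<^sup>* a v"
  using assms(1)
proof (induction rule: rtranclp_induct)
  case base then show ?case by simp
next
  case (step v w)
  have "v \<in> compo V E S a" "w \<in> compo V E S a"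
    using step(1) step(1)[THEN rtranclp.rtrancl_into_rtrancl, OF step(2)] unfolding compo_def by auto
  then have "RW E (compo V E S a) v w" using step(2) by (simp add: RW_def)
  then show ?case using step(3) by (simp add: rtranclp.rtrancl_into_rtrancl)
qed

lemma rw_path_in:
  assumes "successively (RW E W) p" "p \<noteq> []" "hd p \<in> W"
  shows "set p \<subseteq> W"
proof
  fix v assume "v \<in> set p"
  then have "(RW E W)\<^sup>*\<^sup>* (hd p) v" using path_reach[OF assms(1,2)] by blast
  then show "v \<in> W" using rw_reach_cases assms(3) by fastforce
qed

lemma sep_nbr:
  assumes G: "graph V E" and a: "a \<in> V - S" and sepS: "\<not> (RW E (V - S))\<^sup>*\<^sup>* a b"
    and nsep: "(RW E (V - (S - {x})))\<^sup>*\<^sup>* a b" and x: "x \<in> S"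
  shows "\<exists>u. E x u \<and> u \<in> compo V E S a"
proof (rule ccontr)
  assume nn: "\<not> (\<exists>u. E x u \<and> u \<in> compo V E S a)"
  have sym: "\<And>u v. E u v \<Longrightarrow> E v u" using G by (auto simp: graph_def)
  have cl: "w \<in> compo V E S a" if v: "v \<in> compo V E S a" and st: "RW E (V - (S - {x})) v w" for v w
  proof -
    have "E v w" "w \<in> V" "w \<notin> S - {x}" using st by (auto simp: RW_def)
    moreover have "w \<noteq> x" using nn v sym calculation(1) by blast
    ultimately show ?thesis using comp_closed[OF v _ _ a] by blast
  qed
  have aC: "a \<in> compo V E S a" unfolding compo_def by simp
  have "b \<in> compo V E S a"
    by (rule closure_reach[of "compo V E S a" "RW E (V - (S - {x}))" a b, OF cl aC nsep])
  then show False using sepS unfolding compo_def by simp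
qed

lemma chordless_thru:
  assumes G: "graph V E" and xy: "x \<notin> C" "y \<notin> C" "x \<noteq> y" "\<not> E x y"
    and xa: "E x xa" "xa \<in> C" and ya: "E ya y" "ya \<in> C" and r: "(RW E C)\<^sup>*\<^sup>* xa ya"
  shows "\<exists>p. thru E C x y p \<and> chordless E p"
proof -
  have sym: "\<And>u v. E u v \<Longrightarrow> E v u" and irr: "\<And>u. \<not> E u u" using G by (auto simp: graph_def)
  obtain q where q: "q \<noteq> []" "hd q = xa" "last q = ya" "successively (RW E C) q" "distinct q"
    using walk_to_path[OF r] by blast
  have qC: "set q \<subseteq> C" using rw_path_in[OF q(4,1)] q(2) xa(2) by simp
  have sq: "successively E q" using q(4) by (auto simp: RW_def intro: successively_mono)
  define p0 where "p0 = x # q @ [y]"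
  have "thru E C x y p0" unfolding thru_def p0_def
  proof (intro conjI)
    show "3 \<le> length (x # q @ [y])" using q(1) by (cases q) auto
    show "distinct (x # q @ [y])" using q(5) qC xy by auto
    show "set (x # q @ [y]) \<subseteq> insert x (insert y C)" using qC by auto
    show "successively E (x # q @ [y])"
      using sq q(1,2,3) xa(1) ya(1) by (auto simp: successively_append_iff successively_Cons)
  qed simp_all
  then obtain p where p: "thru E C x y p" "\<forall>p'. thru E C x y p' \<longrightarrow> length p \<le> length p'"
    using ex_has_least_nat[of "thru E C x y" p0 length] by blast
  then show ?thesis using shortest_chordless[OF sym irr xy(4) p(1) p(2)] by blast
qed

lemma minsep_clique:
  assumes G: "graph V E" and ch: "chordal V E" and ab: "a \<in> V" "b \<in> V"
    and SV: "S \<subseteq> V - {a, b}" and sepS: "\<not> (RW E (V - S))\<^sup>*\<^sup>* a b"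
    and min: "\<forall>S'. S' \<subseteq> V - {a, b} \<longrightarrow> \<not> (RW E (V - S'))\<^sup>*\<^sup>* a b \<longrightarrow> card S \<le> card S'"
    and x: "x \<in> S" and y: "y \<in> S" and xy: "x \<noteq> y"
  shows "E x y"
proof (rule ccontr)
  assume nxy: "\<not> E x y"
  have sym: "\<And>u v. E u v \<Longrightarrow> E v u" using G by (auto simp: graph_def)
  have finV: "finite V" using G by (simp add: graph_def)
  have aS: "a \<in> V - S" and bS: "b \<in> V - S" using ab SV by auto
  define Ca where "Ca = compo V E S a"
  define Cb where "Cb = compo V E S b"
  have sepS': "\<not> (RW E (V - S))\<^sup>*\<^sup>* b a" using sepS rw_sym[of E, OF sym] by blast
  have CaS: "Ca \<subseteq> V - S" unfolding Ca_def by (rule comp_sub[OF aS])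
  have CbS: "Cb \<subseteq> V - S" unfolding Cb_def by (rule comp_sub[OF bS])
  have dis: "Ca \<inter> Cb = {}"
  proof (rule ccontr)
    assume "Ca \<inter> Cb \<noteq> {}"
    then obtain v where "(RW E (V - S))\<^sup>*\<^sup>* a v" "(RW E (V - S))\<^sup>*\<^sup>* b v" unfolding Ca_def Cb_def compo_def by blast
    then show False using sepS rw_sym[of E, OF sym] by (meson rtranclp_trans)
  qed
  have noE: "\<forall>u\<in>Ca. \<forall>w\<in>Cb. \<not> E u w"
  proof (intro ballI notI)
    fix u w assume "u \<in> Ca" "w \<in> Cb" "E u w"
    then have "w \<in> Ca" unfolding Ca_def using comp_closed[OF _ _ _ aS] CbS by blast
    then show False using dis \<open>w \<in> Cb\<close> by blast
  qed
  have nonsep: "(RW E (V - (S - {z})))\<^sup>*\<^sup>* a b" if z: "z \<in> S" for z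
  proof (rule ccontr)
    assume "\<not> (RW E (V - (S - {z})))\<^sup>*\<^sup>* a b"
    moreover have "S - {z} \<subseteq> V - {a, b}" using SV by blast
    ultimately have "card S \<le> card (S - {z})" using min by blast
    moreover have "finite S" using SV finV finite_subset by blast
    moreover have "0 < card S" using calculation(2) z card_gt_0_iff by blast
    ultimately show False using z by simp
  qed
  have nonsep': "(RW E (V - (S - {z})))\<^sup>*\<^sup>* b a" if z: "z \<in> S" for z
    using nonsep[OF z] rw_sym[of E, OF sym] by blast
  obtain xa where xa: "E x xa" "xa \<in> Ca" using sep_nbr[OF G aS sepS nonsep[OF x] x] Ca_def by blast
  obtain ya where ya: "E y ya" "ya \<in> Ca" using sep_nbr[OF G aS sepS nonsep[OF y] y] Ca_def by blast
  obtain xb where xb: "E x xb" "xb \<in> Cb" using sep_nbr[OF G bS sepS' nonsep'[OF x] x] Cb_def by blast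
  obtain yb where yb: "E y yb" "yb \<in> Cb" using sep_nbr[OF G bS sepS' nonsep'[OF y] y] Cb_def by blast
  have conn: "(RW E C)\<^sup>*\<^sup>* u w" if "C = compo V E S c" "c \<in> V - S" "u \<in> C" "w \<in> C" for C c u w
  proof -
    have "(RW E (V - S))\<^sup>*\<^sup>* c u" "(RW E (V - S))\<^sup>*\<^sup>* c w" using that unfolding compo_def by auto
    then have "(RW E C)\<^sup>*\<^sup>* c u" "(RW E C)\<^sup>*\<^sup>* c w" using comp_conn[OF _ that(2)] that(1) by auto
    then show ?thesis using rw_sym[of E, OF sym] by (meson rtranclp_trans)
  qed
  have xyC: "x \<notin> Ca" "y \<notin> Ca" "x \<notin> Cb" "y \<notin> Cb" using CaS CbS x y by auto
  obtain p where p: "thru E Ca x y p" "chordless E p"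
    using chordless_thru[OF G xyC(1,2) xy nxy xa sym[OF ya(1)] ya(2) conn[OF Ca_def aS xa(2) ya(2)]] by blast
  obtain r where r: "thru E Cb x y r" "chordless E r"
    using chordless_thru[OF G xyC(3,4) xy nxy xb sym[OF yb(1)] yb(2) conn[OF Cb_def bS xb(2) yb(2)]] by blast
  have pV: "set p \<subseteq> V" using p(1) CaS x y SV unfolding thru_def by blast
  have rV: "set r \<subseteq> V" using r(1) CbS x y SV unfolding thru_def by blast
  have "induced_cycle V E (p @ butlast (tl (rev r))) \<and> 4 \<le> length (p @ butlast (tl (rev r)))"
    using glue_induced[OF G p(1) r(1) p(2) r(2) dis xyC(1) xyC(3) xyC(2) xyC(4) noE pV rV] .
  then show False using ch unfolding chordal_def by fastforce
qed

definition simplicial :: "'a set \<Rightarrow> ('a \<Rightarrow> 'a \<Rightarrow> bool) \<Rightarrow> 'a \<Rightarrow> bool" where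
  "simplicial V E v \<longleftrightarrow> v \<in> V \<and> (\<forall>u w. E v u \<longrightarrow> E v w \<longrightarrow> u \<noteq> w \<longrightarrow> E u w)"

lemma graph_induced: "graph V E \<Longrightarrow> W \<subseteq> V \<Longrightarrow> graph W (RW E W)"
  unfolding graph_def RW_def using finite_subset by blast

lemma chordal_induced:
  assumes ch: "chordal V E" and WV: "W \<subseteq> V"
  shows "chordal W (RW E W)"
  unfolding chordal_def
proof (intro allI impI)
  fix c assume ic: "induced_cycle W (RW E W) c"
  then have cyc: "is_cycle W (RW E W) c" by (simp add: induced_cycle_def)
  then have cW: "set c \<subseteq> W" by (simp add: is_cycle_def)
  have "is_cycle V E c" using cyc WV unfolding is_cycle_def RW_def by auto
  moreover have "\<forall>i < length c. \<forall>j < length c. E (c ! i) (c ! j) \<longrightarrow>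
        j = (i + 1) mod length c \<or> i = (j + 1) mod length c"
  proof (intro allI impI)
    fix i j assume ij: "i < length c" "j < length c" and e: "E (c ! i) (c ! j)"
    have "c ! i \<in> W" "c ! j \<in> W" using ij cW by auto
    then have "RW E W (c ! i) (c ! j)" using e by (simp add: RW_def)
    then show "j = (i + 1) mod length c \<or> i = (j + 1) mod length c"
      using ic ij unfolding induced_cycle_def by blast
  qed
  ultimately have "induced_cycle V E c" by (simp add: induced_cycle_def)
  then show "length c = 3" using ch by (simp add: chordal_def)
qed

lemma dirac_aux:
  assumes "card V = n" "graph V E" "chordal V E" "V \<noteq> {}"
  shows "(\<exists>v. simplicial V E v) \<and> ((\<exists>a\<in>V. \<exists>b\<in>V. a \<noteq> b \<and> \<not> E a b) \<longrightarrow>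
     (\<exists>u w. simplicial V E u \<and> simplicial V E w \<and> u \<noteq> w \<and> \<not> E u w))"
  using assms
proof (induction n arbitrary: V E rule: less_induct)
  case (less n)
  note G = less.prems(2) and ch = less.prems(3) and ne = less.prems(4)
  have sym: "\<And>u v. E u v \<Longrightarrow> E v u" and irr: "\<And>u. \<not> E u u"
    and Ein: "\<And>u v. E u v \<Longrightarrow> u \<in> V \<and> v \<in> V" using G by (auto simp: graph_def)
  have finV: "finite V" using G by (simp add: graph_def)
  show ?case
  proof (cases "\<exists>a\<in>V. \<exists>b\<in>V. a \<noteq> b \<and> \<not> E a b")
    case False
    obtain v where v: "v \<in> V" using ne by blast
    have "simplicial V E v" unfolding simplicial_def using v False Ein by blast
    then show ?thesis using False by blast
  next
    case True
    then obtain a b where ab: "a \<in> V" "b \<in> V" "a \<noteq> b" "\<not> E a b" by blast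
    define Sp where "Sp = (\<lambda>S. S \<subseteq> V - {a, b} \<and> \<not> (RW E (V - S))\<^sup>*\<^sup>* a b)"
    have "Sp (V - {a, b})"
      unfolding Sp_def
    proof (intro conjI notI)
      assume r: "(RW E (V - (V - {a, b})))\<^sup>*\<^sup>* a b"
      have cl: "w \<in> {a}" if "v \<in> {a}" "RW E (V - (V - {a, b})) v w" for v w
        using that ab irr by (auto simp: RW_def)
      have aa: "a \<in> {a}" by simp
      have "b \<in> {a}" by (rule closure_reach[of "{a}" _ a b, OF cl aa r])
      then show False using ab by simp
    qed simp
    then obtain S where Sp: "Sp S" and Smin: "\<forall>S'. Sp S' \<longrightarrow> card S \<le> card S'"
      using ex_has_least_nat[of Sp "V - {a, b}" card] by blast
    have SV: "S \<subseteq> V - {a, b}" and sepS: "\<not> (RW E (V - S))\<^sup>*\<^sup>* a b" using Sp by (auto simp: Sp_def)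
    have clq: "E x y" if "x \<in> S" "y \<in> S" "x \<noteq> y" for x y
      using minsep_clique[OF G ch ab(1,2) SV sepS _ that] Smin unfolding Sp_def by blast
    have side: "\<exists>z\<in>compo V E S c. simplicial V E z"
      if c: "c \<in> V - S" and d: "d \<in> V - S" and sep: "\<not> (RW E (V - S))\<^sup>*\<^sup>* c d" for c d
    proof -
      define Vc where "Vc = compo V E S c \<union> S"
      have cS: "compo V E S c \<subseteq> V - S" by (rule comp_sub[OF c])
      have VcV: "Vc \<subseteq> V" using cS SV Vc_def by blast
      have dVc: "d \<notin> Vc" using sep d unfolding Vc_def compo_def by blast
      have lessc: "card Vc < n" using VcV dVc d less.prems(1) finV by (metis Diff_iff psubsetI psubset_card_mono)
      have cc: "c \<in> compo V E S c" unfolding compo_def by simp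
      have nb: "u \<in> Vc" if "z \<in> compo V E S c" "E z u" for z u
      proof (cases "u \<in> S")
        case True then show ?thesis using Vc_def by blast
      next
        case False
        then have "u \<in> V - S" using Ein[OF that(2)] by blast
        then show ?thesis using comp_closed[OF that(1) _ that(2) c] Vc_def by blast
      qed
      have lift: "simplicial V E z" if z: "z \<in> compo V E S c" and sz: "simplicial Vc (RW E Vc) z" for z
        unfolding simplicial_def
      proof (intro conjI allI impI)
        show "z \<in> V" using z cS by blast
        fix u w assume "E z u" "E z w" "u \<noteq> w"
        moreover have "u \<in> Vc" "w \<in> Vc" "z \<in> Vc" using nb z calculation Vc_def by auto
        ultimately have "RW E Vc z u" "RW E Vc z w" by (auto simp: RW_def)
        then have "RW E Vc u w" using sz \<open>u \<noteq> w\<close> by (simp add: simplicial_def)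
        then show "E u w" by (simp add: RW_def)
      qed
      have IH: "(\<exists>v. simplicial Vc (RW E Vc) v) \<and> ((\<exists>a\<in>Vc. \<exists>b\<in>Vc. a \<noteq> b \<and> \<not> RW E Vc a b) \<longrightarrow>
         (\<exists>u w. simplicial Vc (RW E Vc) u \<and> simplicial Vc (RW E Vc) w \<and> u \<noteq> w \<and> \<not> RW E Vc u w))"
        using less.IH[OF lessc refl graph_induced[OF G VcV] chordal_induced[OF ch VcV]] cc Vc_def by blast
      show ?thesis
      proof (cases "\<exists>a\<in>Vc. \<exists>b\<in>Vc. a \<noteq> b \<and> \<not> RW E Vc a b")
        case True
        have ex: "\<exists>u w. simplicial Vc (RW E Vc) u \<and> simplicial Vc (RW E Vc) w \<and> u \<noteq> w \<and> \<not> RW E Vc u w"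
          using True by (rule mp[OF conjunct2[OF IH]])
        then obtain u w where uw: "simplicial Vc (RW E Vc) u" "simplicial Vc (RW E Vc) w" "u \<noteq> w"
          "\<not> RW E Vc u w" by auto
        have inVc: "u \<in> Vc" "w \<in> Vc" using uw(1,2) unfolding simplicial_def by blast+
        then have "\<not> E u w" using uw(4) by (simp add: RW_def)
        then have "u \<notin> S \<or> w \<notin> S" using clq[of u w] uw(3) by blast
        then have "u \<in> compo V E S c \<or> w \<in> compo V E S c" using inVc Vc_def by blast
        then show ?thesis using lift uw(1,2) by blast
      next
        case False
        have "simplicial V E c" unfolding simplicial_def
        proof (intro conjI allI impI)
          show "c \<in> V" using c by blast
          fix u w assume "E c u" "E c w" "u \<noteq> w"
          moreover have "u \<in> Vc" "w \<in> Vc" using nb cc calculation by auto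
          ultimately have "RW E Vc u w" using False by blast
          then show "E u w" by (simp add: RW_def)
        qed
        then show ?thesis using cc by blast
      qed
    qed
    have aS: "a \<in> V - S" and bS: "b \<in> V - S" using ab SV by auto
    have sepS': "\<not> (RW E (V - S))\<^sup>*\<^sup>* b a" using sepS rw_sym[of E, OF sym] by blast
    obtain za where za: "za \<in> compo V E S a" "simplicial V E za" using side[OF aS bS sepS] by blast
    obtain zb where zb: "zb \<in> compo V E S b" "simplicial V E zb" using side[OF bS aS sepS'] by blast
    have dis: "compo V E S a \<inter> compo V E S b = {}"
    proof (rule ccontr)
      assume "compo V E S a \<inter> compo V E S b \<noteq> {}"
      then obtain v where "(RW E (V - S))\<^sup>*\<^sup>* a v" "(RW E (V - S))\<^sup>*\<^sup>* b v" unfolding compo_def by blast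
      then show False using sepS rw_sym[of E, OF sym] by (meson rtranclp_trans)
    qed
    have "za \<noteq> zb" using za zb dis by blast
    moreover have "\<not> E za zb"
    proof
      assume "E za zb"
      moreover have "zb \<in> V - S" using zb(1) comp_sub[OF bS] by blast
      ultimately have "zb \<in> compo V E S a" using comp_closed[OF za(1) _ _ aS] by blast
      then show False using zb(1) dis by blast
    qed
    ultimately show ?thesis using za zb by blast
  qed
qed

lemma dirac:
  assumes "graph V E" "chordal V E" "V \<noteq> {}"
  shows "\<exists>v. simplicial V E v"
  using dirac_aux[OF refl assms] by blast

lemma connected_via_center:
  assumes sym: "\<And>u v. R u v \<Longrightarrow> R v u" and c: "\<forall>s\<in>W. (RW R W)\<^sup>*\<^sup>* s c"
  shows "connected_on W R"
  unfolding connected_on_RW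
proof (intro ballI)
  fix u v assume "u \<in> W" "v \<in> W"
  then have "(RW R W)\<^sup>*\<^sup>* u c" "(RW R W)\<^sup>*\<^sup>* v c" using c by auto
  then show "(RW R W)\<^sup>*\<^sup>* u v" using rw_sym[of R, OF sym] by (meson rtranclp_trans)
qed

lemma add_leaf_conn:
  assumes conn: "connected_on T F" and t0: "t0 \<in> T" and n: "n \<notin> T"
    and F2: "\<And>s t. F2 s t \<longleftrightarrow> F s t \<or> (s = n \<and> t = t0) \<or> (s = t0 \<and> t = n)"
    and sym: "\<And>u v. F u v \<Longrightarrow> F v u"
  shows "connected_on (insert n T) F2"
proof (rule connected_via_center)
  show "\<And>u v. F2 u v \<Longrightarrow> F2 v u" using F2 sym by blast
  show "\<forall>s\<in>insert n T. (RW F2 (insert n T))\<^sup>*\<^sup>* s t0"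
  proof
    fix s assume s: "s \<in> insert n T"
    show "(RW F2 (insert n T))\<^sup>*\<^sup>* s t0"
    proof (cases "s = n")
      case True
      then have "RW F2 (insert n T) s t0" using F2 t0 by (simp add: RW_def)
      then show ?thesis by simp
    next
      case False
      then have "(RW F T)\<^sup>*\<^sup>* s t0" using s conn t0 by (simp add: connected_on_RW)
      then show ?thesis by (rule rw_mono) (use F2 in auto)
    qed
  qed
qed

lemma add_leaf_tree:
  assumes tr: "is_tree I F" and t0: "t0 \<in> I" and n: "n \<notin> I"
    and F2: "\<And>s t. F2 s t \<longleftrightarrow> F s t \<or> (s = n \<and> t = t0) \<or> (s = t0 \<and> t = n)"
  shows "is_tree (insert n I) F2"
proof -
  have G: "graph I F" and conn: "connected_on I F" and nc: "\<not> (\<exists>c. is_cycle I F c)"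
    using tr by (auto simp: is_tree_def)
  have Fin: "\<And>u v. F u v \<Longrightarrow> u \<in> I \<and> v \<in> I \<and> u \<noteq> v \<and> F v u" using G by (auto simp: graph_def)
  have sym: "\<And>u v. F u v \<Longrightarrow> F v u" using Fin by blast
  have G2: "graph (insert n I) F2"
    using G t0 n unfolding graph_def F2 by auto
  have conn2: "connected_on (insert n I) F2" by (rule add_leaf_conn[OF conn t0 n F2 sym])
  have nc2: "\<not> (\<exists>c. is_cycle (insert n I) F2 c)"
  proof
    assume "\<exists>c. is_cycle (insert n I) F2 c"
    then obtain c where c: "is_cycle (insert n I) F2 c" by blast
    let ?L = "length c"
    have cd: "distinct c" "3 \<le> ?L" "set c \<subseteq> insert n I" using c by (auto simp: is_cycle_def)
    have adj: "\<And>i. i < ?L \<Longrightarrow> F2 (c ! i) (c ! ((i + 1) mod ?L))" using c by (simp add: is_cycle_def)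
    show False
    proof (cases "n \<in> set c")
      case False
      then have "set c \<subseteq> I" using cd by blast
      moreover have "\<And>i. i < ?L \<Longrightarrow> F (c ! i) (c ! ((i + 1) mod ?L))"
      proof -
        fix i assume i: "i < ?L"
        have L0: "0 < ?L" using cd(2) by linarith
        have "(i + 1) mod ?L < ?L" using mod_less_divisor[OF L0] by blast
        then have "c ! ((i + 1) mod ?L) \<in> set c" "c ! i \<in> set c" using i by simp_all
        then have "c ! i \<noteq> n" "c ! ((i + 1) mod ?L) \<noteq> n" using False by auto
        then show "F (c ! i) (c ! ((i + 1) mod ?L))" using adj[OF i] F2 by blast
      qed
      ultimately have "is_cycle I F c" using cd by (simp add: is_cycle_def)
      then show False using nc by blast
    next
      case True
      then obtain k where k: "k < ?L" "c ! k = n" by (metis in_set_conv_nth)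
      have nF: "\<And>x. F2 n x \<Longrightarrow> x = t0" "\<And>x. F2 x n \<Longrightarrow> x = t0" using F2 Fin n by blast+
      define i where "i = (k + ?L - 1) mod ?L"
      have L0': "0 < ?L" using cd(2) by linarith
      have iL: "i < ?L" unfolding i_def by (rule mod_less_divisor[OF L0'])
      have i1: "(i + 1) mod ?L = k"
      proof -
        have "(i + 1) mod ?L = ((k + ?L - 1) + 1) mod ?L" unfolding i_def by (simp add: mod_Suc_eq)
        also have "(k + ?L - 1) + 1 = k + ?L" using cd(2) by simp
        finally show ?thesis using k(1) by simp
      qed
      have a1: "c ! ((k + 1) mod ?L) = t0" using adj[OF k(1)] k(2) nF(1) by simp
      have a2: "c ! i = t0" using adj[OF iL] i1 k(2) nF(2) by simp
      have ne: "(k + 1) mod ?L \<noteq> i"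
      proof
        assume "(k + 1) mod ?L = i"
        then have "((k + 1) mod ?L + 1) mod ?L = k" using i1 by simp
        then have "(k + 2) mod ?L = k" by (simp add: mod_Suc_eq)
        then have "(k + 2) mod ?L = (k + 0) mod ?L" using k(1) by simp
        then have "2 = (0::nat)" using mod_inj[of k 2 ?L 0] cd(2) by linarith
        then show False by simp
      qed
      have "(k + 1) mod ?L < ?L" by (rule mod_less_divisor[OF L0'])
      then have "c ! ((k + 1) mod ?L) \<noteq> c ! i" using nth_eq_iff_index_eq[OF cd(1) _ iL] ne by blast
      then show False using a1 a2 by simp
    qed
  qed
  show ?thesis unfolding is_tree_def using G2 conn2 nc2 by blast
qed

lemma clique_td_aux:
  assumes "card V = m" "graph V E" "chordal V E"
  shows "\<exists>(I :: nat set) F B. tree_decomposition V E I F B \<and> (\<forall>t\<in>I. \<forall>u\<in>B t. \<forall>w\<in>B t. u \<noteq> w \<longrightarrow> E u w)"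
  using assms
proof (induction m arbitrary: V E rule: less_induct)
  case (less m)
  note G = less.prems(2) and ch = less.prems(3)
  have Ein: "\<And>u v. E u v \<Longrightarrow> u \<in> V \<and> v \<in> V \<and> u \<noteq> v \<and> E v u" using G by (auto simp: graph_def)
  have finV: "finite V" using G by (simp add: graph_def)
  show ?case
  proof (cases "V = {}")
    case True
    have "tree_decomposition V E {0::nat} (\<lambda>_ _. False) (\<lambda>_. {})"
      using trivial_td[OF G] True by simp
    then show ?thesis by fastforce
  next
    case False
    obtain v where sv: "simplicial V E v" using dirac[OF G ch False] by blast
    have vV: "v \<in> V" using sv by (simp add: simplicial_def)
    define V' where "V' = V - {v}"
    define E' where "E' = RW E V'"
    have V'V: "V' \<subseteq> V" using V'_def by blast
    have "0 < card V" using vV finV card_gt_0_iff by blast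
    then have lessm: "card V' < m" using V'_def vV finV less.prems(1) by simp
    obtain I :: "nat set" and F B where td: "tree_decomposition V' E' I F B"
      and cl: "\<forall>t\<in>I. \<forall>u\<in>B t. \<forall>w\<in>B t. u \<noteq> w \<longrightarrow> E' u w"
      using less.IH[OF lessm refl graph_induced[OF G V'V] chordal_induced[OF ch V'V]] E'_def by blast
    have tree: "is_tree I F" and U: "(\<Union>t\<in>I. B t) = V'"
      and edge: "\<And>u w. E' u w \<Longrightarrow> \<exists>t\<in>I. u \<in> B t \<and> w \<in> B t"
      and tv: "\<And>x. x \<in> V' \<Longrightarrow> connected_on {t \<in> I. x \<in> B t} F"
      using td unfolding tree_decomposition_def by blast+
    have treeG: "graph I F" "\<not> (\<exists>c. is_cycle I F c)" "I \<noteq> {}" using tree by (auto simp: is_tree_def)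
    have finI: "finite I" using treeG by (simp add: graph_def)
    have Fsym: "\<And>u w. F u w \<Longrightarrow> F w u" using treeG by (auto simp: graph_def)
    define N where "N = {u. E v u}"
    have NV': "N \<subseteq> V'" using Ein V'_def N_def by auto
    have Ncl: "\<And>u w. u \<in> N \<Longrightarrow> w \<in> N \<Longrightarrow> u \<noteq> w \<Longrightarrow> E u w"
      using sv unfolding simplicial_def N_def by blast
    define \<T> where "\<T> = (\<lambda>u. {t\<in>I. u \<in> B t}) ` N"
    have h1: "\<forall>T\<in>\<T>. T \<noteq> {} \<and> T \<subseteq> I \<and> connected_on T F"
    proof
      fix T assume "T \<in> \<T>"
      then obtain u where u: "u \<in> N" "T = {t\<in>I. u \<in> B t}" unfolding \<T>_def by blast
      have "u \<in> V'" using u NV' by blast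
      then show "T \<noteq> {} \<and> T \<subseteq> I \<and> connected_on T F" using u U tv by blast
    qed
    have h2: "\<forall>T1\<in>\<T>. \<forall>T2\<in>\<T>. T1 \<inter> T2 \<noteq> {}"
    proof (intro ballI)
      fix T1 T2 assume "T1 \<in> \<T>" "T2 \<in> \<T>"
      then obtain u w where uw: "u \<in> N" "w \<in> N" "T1 = {t\<in>I. u \<in> B t}" "T2 = {t\<in>I. w \<in> B t}"
        unfolding \<T>_def by blast
      show "T1 \<inter> T2 \<noteq> {}"
      proof (cases "u = w")
        case True
        then show ?thesis using uw h1 \<open>T1 \<in> \<T>\<close> by blast
      next
        case False
        then have "E' u w" using Ncl uw NV' E'_def by (auto simp: RW_def)
        then obtain t where "t \<in> I" "u \<in> B t" "w \<in> B t" using edge by blast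
        then show ?thesis using uw by blast
      qed
    qed
    obtain t0 where t0: "t0 \<in> I" "\<forall>T\<in>\<T>. t0 \<in> T" using helly[OF treeG h1 h2] by blast
    have Nt0: "N \<subseteq> B t0"
    proof
      fix u assume "u \<in> N"
      then have "{t\<in>I. u \<in> B t} \<in> \<T>" unfolding \<T>_def by blast
      then have "t0 \<in> {t\<in>I. u \<in> B t}" by (rule bspec[OF t0(2)])
      then show "u \<in> B t0" by simp
    qed
    define n where "n = Suc (Max I)"
    have nI: "n \<notin> I"
    proof
      assume "n \<in> I"
      then have "n \<le> Max I" using Max_ge[OF finI] by blast
      then show False using n_def by simp
    qed
    define F2 where "F2 = (\<lambda>s t. F s t \<or> (s = n \<and> t = t0) \<or> (s = t0 \<and> t = n))"
    have F2: "\<And>s t. F2 s t \<longleftrightarrow> F s t \<or> (s = n \<and> t = t0) \<or> (s = t0 \<and> t = n)" unfolding F2_def by simp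
    define B2 where "B2 = B(n := insert v N)"
    have B2I: "\<And>t. t \<in> I \<Longrightarrow> B2 t = B t" using nI B2_def by auto
    have B2n: "B2 n = insert v N" using B2_def by simp
    have BV': "\<And>t. t \<in> I \<Longrightarrow> B t \<subseteq> V'" using U by blast
    have tree2: "is_tree (insert n I) F2" by (rule add_leaf_tree[OF tree t0(1) nI F2])
    have U2: "(\<Union>t\<in>insert n I. B2 t) = V"
    proof -
      have "(\<Union>t\<in>insert n I. B2 t) = insert v N \<union> (\<Union>t\<in>I. B t)" using B2I B2n by auto
      also have "\<dots> = V" using U NV' vV V'_def by auto
      finally show ?thesis .
    qed
    have edge2: "\<forall>u w. E u w \<longrightarrow> (\<exists>t\<in>insert n I. u \<in> B2 t \<and> w \<in> B2 t)"
    proof (intro allI impI)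
      fix u w assume e: "E u w"
      show "\<exists>t\<in>insert n I. u \<in> B2 t \<and> w \<in> B2 t"
      proof (cases "u = v \<or> w = v")
        case True
        then have "u \<in> insert v N" "w \<in> insert v N" using e Ein N_def by auto
        then show ?thesis using B2n by blast
      next
        case False
        then have "E' u w" using e Ein V'_def E'_def by (auto simp: RW_def)
        then obtain t where "t \<in> I" "u \<in> B t" "w \<in> B t" using edge by blast
        then show ?thesis using B2I by auto
      qed
    qed
    have conn2: "\<forall>x\<in>V. connected_on {t \<in> insert n I. x \<in> B2 t} F2"
    proof
      fix x assume xV: "x \<in> V"
      show "connected_on {t \<in> insert n I. x \<in> B2 t} F2"
      proof (cases "x = v")
        case True
        have "\<And>t. t \<in> I \<Longrightarrow> v \<notin> B t" using BV' V'_def by blast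
        then have "{t \<in> insert n I. x \<in> B2 t} = {n}" using B2I B2n True by auto
        then show ?thesis by (simp add: connected_on_def)
      next
        case xv: False
        then have xV': "x \<in> V'" using xV V'_def by blast
        define Tx where "Tx = {t\<in>I. x \<in> B t}"
        have cTx: "connected_on Tx F" using tv[OF xV'] Tx_def by simp
        show ?thesis
        proof (cases "x \<in> N")
          case True
          then have eq: "{t \<in> insert n I. x \<in> B2 t} = insert n Tx" using B2I B2n Tx_def by auto
          have "t0 \<in> Tx" using True Nt0 t0(1) Tx_def by blast
          moreover have "n \<notin> Tx" using nI Tx_def by blast
          ultimately show ?thesis unfolding eq using add_leaf_conn[OF cTx _ _ F2 Fsym] by blast
        next
          case False
          then have eq: "{t \<in> insert n I. x \<in> B2 t} = Tx" using B2I B2n Tx_def xv by auto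
          have "RW F2 Tx = RW F Tx" using nI Tx_def F2 by (auto simp: RW_def fun_eq_iff)
          then show ?thesis unfolding eq using cTx by (simp add: connected_on_RW)
        qed
      qed
    qed
    have td2: "tree_decomposition V E (insert n I) F2 B2"
      unfolding tree_decomposition_def using tree2 U2 edge2 conn2 by blast
    have cl2: "\<forall>t\<in>insert n I. \<forall>u\<in>B2 t. \<forall>w\<in>B2 t. u \<noteq> w \<longrightarrow> E u w"
    proof (intro ballI impI)
      fix t u w assume t: "t \<in> insert n I" and uw: "u \<in> B2 t" "w \<in> B2 t" "u \<noteq> w"
      show "E u w"
      proof (cases "t = n")
        case True
        then have "u \<in> insert v N" "w \<in> insert v N" using uw B2n by auto
        then have cases: "u = v \<and> w \<in> N \<or> w = v \<and> u \<in> N \<or> u \<in> N \<and> w \<in> N" using uw(3) by blast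
        moreover have "w \<in> N \<Longrightarrow> E v w" "u \<in> N \<Longrightarrow> E u v" using N_def Ein by auto
        ultimately show ?thesis using Ncl[of u w] uw(3) by blast
      next
        case False
        then have "t \<in> I" using t by blast
        then have "E' u w" using cl uw B2I by auto
        then show ?thesis using E'_def by (simp add: RW_def)
      qed
    qed
    show ?thesis using td2 cl2 by blast
  qed
qed

lemma chordal_bound:
  assumes G: "graph V E" and tc: "two_connected V E" and ch: "chordal V E"
  shows "lct V E \<le> clique_number V E"
proof -
  obtain I :: "nat set" and F B where td: "tree_decomposition V E I F B"
    and cl: "\<forall>t\<in>I. \<forall>u\<in>B t. \<forall>w\<in>B t. u \<noteq> w \<longrightarrow> E u w"
    using clique_td_aux[OF refl G ch] by blast
  obtain t where t: "t \<in> I" "lct V E \<le> card (B t)" using lct_bag[OF G tc td] by blast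
  have BV: "B t \<subseteq> V" using td_bag_sub[OF td t(1)] .
  have mem: "card (B t) \<in> {card K | K. K \<subseteq> V \<and> (\<forall>u\<in>K. \<forall>v\<in>K. u \<noteq> v \<longrightarrow> E u v)}"
    using BV cl t(1) by blast
  have fin: "finite {card K | K. K \<subseteq> V \<and> (\<forall>u\<in>K. \<forall>v\<in>K. u \<noteq> v \<longrightarrow> E u v)}"
  proof -
    have "{card K | K. K \<subseteq> V \<and> (\<forall>u\<in>K. \<forall>v\<in>K. u \<noteq> v \<longrightarrow> E u v)} \<subseteq> card ` Pow V" by blast
    moreover have "finite V" using G by (simp add: graph_def)
    ultimately show ?thesis using finite_subset by blast
  qed
  have "card (B t) \<le> clique_number V E" unfolding clique_number_def using Max_ge[OF fin mem] .
  then show ?thesis using t(2) by linarith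
qed

theorem corollary5p4:
  fixes V :: "'a set" and E :: "'a \<Rightarrow> 'a \<Rightarrow> bool"
  assumes "graph V E" and "two_connected V E"
  shows "lct V E \<le> treewidth V E + 1 \<and> (chordal V E \<longrightarrow> lct V E \<le> clique_number V E)"
  using tw_bound[OF assms] chordal_bound[OF assms] by blast

end
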